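(* Let $\beta\ge5$ and $\epsilon\in\{1,-1\}$. (a) There is no tight chiral $4$-polytope of type $\{4,2^\beta,8\}$ whose standard generators satisfy $\sigma_2^{-1}\sigma_1=\sigma_1^{-1}\sigma_2^{1+2^{\beta-1}}$ and $\sigma_2\sigma_3^2=\sigma_3^2\sigma_2^{1+\epsilon2^{\beta-2}}$. (b) There is no tight chiral $4$-polytope of type $\{4,2^\beta,2^{\beta-1}\}$ whose standard generators satisfy $\sigma_2^{-1}\sigma_1=\sigma_1^{-1}\sigma_2^{1+2^{\beta-1}}$, $\sigma_3^{-1}\sigma_2=\sigma_2^{3+\epsilon2^{\beta-2}}\sigma_3^{1-2^{\beta-2}}$ and $\sigma_3\sigma_2^{-1}=\sigma_2^{-3+\epsilon2^{\beta-2}}\sigma_3^{-1+2^{\beta-2}}$.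
   Context: For a chiral polytope with base flag $\Phi$, the standard generators $\sigma_1,\sigma_2,\sigma_3$ of its automorphism group are the automorphisms with $\Phi\sigma_i=\Phi^{i(i-1)}$, where $\Phi^j$ is the flag differing from $\Phi$ only in its $j$-face; for type $\{p,q,r\}$ they have orders $p,q,r$ and satisfy $(\sigma_1\sigma_2)^2=(\sigma_2\sigma_3)^2=(\sigma_1\sigma_2\sigma_3)^2=1$. Tight: type $\{p,q,r\}$ with exactly $2pqr$ flags. *)

theory Defs
  imports "HOL-Algebra.Bij"
begin

definition po_chain :: "'a set \<Rightarrow> ('a \<Rightarrow> 'a \<Rightarrow> bool) \<Rightarrow> 'a set \<Rightarrow> bool" where
  "po_chain P leq C \<longleftrightarrow> C \<subseteq> P \<and> (\<forall>x\<in>C. \<forall>y\<in>C. leq x y \<or> leq y x)"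

definition is_flag :: "'a set \<Rightarrow> ('a \<Rightarrow> 'a \<Rightarrow> bool) \<Rightarrow> 'a set \<Rightarrow> bool" where
  "is_flag P leq \<Phi> \<longleftrightarrow> po_chain P leq \<Phi> \<and> (\<forall>x\<in>P. po_chain P leq (insert x \<Phi>) \<longrightarrow> x \<in> \<Phi>)"

definition face_rank :: "'a set \<Rightarrow> ('a \<Rightarrow> 'a \<Rightarrow> bool) \<Rightarrow> 'a \<Rightarrow> int \<Rightarrow> bool" where
  "face_rank P leq F j \<longleftrightarrow> F \<in> P \<and>
     (\<exists>\<Phi>. is_flag P leq \<Phi> \<and> F \<in> \<Phi> \<and> int (card {G\<in>\<Phi>. G \<noteq> F \<and> leq G F}) - 1 = j)"

definition adjacent_flags :: "'a set \<Rightarrow> 'a set \<Rightarrow> bool" where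
  "adjacent_flags \<Phi> \<Psi> \<longleftrightarrow> card (\<Phi> - \<Psi>) = 1 \<and> card (\<Psi> - \<Phi>) = 1"

definition abstract_polytope4 :: "'a set \<Rightarrow> ('a \<Rightarrow> 'a \<Rightarrow> bool) \<Rightarrow> bool" where
  "abstract_polytope4 P leq \<longleftrightarrow>
     (\<forall>x\<in>P. leq x x) \<and>
     (\<forall>x\<in>P. \<forall>y\<in>P. leq x y \<and> leq y x \<longrightarrow> x = y) \<and>
     (\<forall>x\<in>P. \<forall>y\<in>P. \<forall>z\<in>P. leq x y \<and> leq y z \<longrightarrow> leq x z) \<and>
     (\<exists>m\<in>P. \<forall>x\<in>P. leq m x) \<and> (\<exists>M\<in>P. \<forall>x\<in>P. leq x M) \<and>
     (\<forall>\<Phi>. is_flag P leq \<Phi> \<longrightarrow> finite \<Phi> \<and> card \<Phi> = 6) \<and>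
     (\<forall>F G j. face_rank P leq F (j - 1) \<and> face_rank P leq G (j + 1) \<and> leq F G \<longrightarrow>
        card {H\<in>P. H \<noteq> F \<and> H \<noteq> G \<and> leq F H \<and> leq H G} = 2) \<and>
     (\<forall>\<Phi> \<Psi>. is_flag P leq \<Phi> \<and> is_flag P leq \<Psi> \<longrightarrow>
        (\<lambda>A B. is_flag P leq A \<and> is_flag P leq B \<and> adjacent_flags A B \<and>
               \<Phi> \<inter> \<Psi> \<subseteq> A \<and> \<Phi> \<inter> \<Psi> \<subseteq> B)\<^sup>*\<^sup>* \<Phi> \<Psi>)"

definition flag_adj :: "'a set \<Rightarrow> ('a \<Rightarrow> 'a \<Rightarrow> bool) \<Rightarrow> 'a set \<Rightarrow> int \<Rightarrow> 'a set \<Rightarrow> bool" where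
  "flag_adj P leq \<Phi> j \<Psi> \<longleftrightarrow> is_flag P leq \<Psi> \<and> \<Psi> \<noteq> \<Phi> \<and>
     (\<forall>F\<in>\<Phi>. \<not> face_rank P leq F j \<longrightarrow> F \<in> \<Psi>)"

definition polytope_aut :: "'a set \<Rightarrow> ('a \<Rightarrow> 'a \<Rightarrow> bool) \<Rightarrow> ('a \<Rightarrow> 'a) \<Rightarrow> bool" where
  "polytope_aut P leq \<sigma> \<longleftrightarrow> \<sigma> \<in> Bij P \<and> (\<forall>x\<in>P. \<forall>y\<in>P. leq x y \<longleftrightarrow> leq (\<sigma> x) (\<sigma> y))"

definition same_orbit :: "'a set \<Rightarrow> ('a \<Rightarrow> 'a \<Rightarrow> bool) \<Rightarrow> 'a set \<Rightarrow> 'a set \<Rightarrow> bool" where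
  "same_orbit P leq \<Phi> \<Psi> \<longleftrightarrow> (\<exists>\<sigma>. polytope_aut P leq \<sigma> \<and> \<sigma> ` \<Phi> = \<Psi>)"

definition chiral4 :: "'a set \<Rightarrow> ('a \<Rightarrow> 'a \<Rightarrow> bool) \<Rightarrow> bool" where
  "chiral4 P leq \<longleftrightarrow> abstract_polytope4 P leq \<and>
     (\<exists>\<Phi> \<Psi>. is_flag P leq \<Phi> \<and> is_flag P leq \<Psi> \<and> \<not> same_orbit P leq \<Phi> \<Psi> \<and>
        (\<forall>X. is_flag P leq X \<longrightarrow> same_orbit P leq \<Phi> X \<or> same_orbit P leq \<Psi> X)) \<and>
     (\<forall>\<Phi> \<Psi> j. is_flag P leq \<Phi> \<and> 0 \<le> j \<and> j \<le> 3 \<and> flag_adj P leq \<Phi> j \<Psi> \<longrightarrow>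
        \<not> same_orbit P leq \<Phi> \<Psi>)"

text \<open>Schlaefli type {p,q,r}: every 2-face is a p-gon, every section F3/F0 is a
q-gon, every section F4/F1 is an r-gon.\<close>
definition has_type4 :: "'a set \<Rightarrow> ('a \<Rightarrow> 'a \<Rightarrow> bool) \<Rightarrow> nat \<Rightarrow> nat \<Rightarrow> nat \<Rightarrow> bool" where
  "has_type4 P leq p q r \<longleftrightarrow>
     (\<forall>F. face_rank P leq F 2 \<longrightarrow> card {x\<in>P. face_rank P leq x 0 \<and> leq x F} = p) \<and>
     (\<forall>F0 F3. face_rank P leq F0 0 \<and> face_rank P leq F3 3 \<and> leq F0 F3 \<longrightarrow>
        card {e\<in>P. face_rank P leq e 1 \<and> leq F0 e \<and> leq e F3} = q) \<and>
     (\<forall>F1. face_rank P leq F1 1 \<longrightarrow> card {f\<in>P. face_rank P leq f 2 \<and> leq F1 f} = r)"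

definition tight4 :: "'a set \<Rightarrow> ('a \<Rightarrow> 'a \<Rightarrow> bool) \<Rightarrow> nat \<Rightarrow> nat \<Rightarrow> nat \<Rightarrow> bool" where
  "tight4 P leq p q r \<longleftrightarrow> has_type4 P leq p q r \<and>
     finite {\<Phi>. is_flag P leq \<Phi>} \<and> card {\<Phi>. is_flag P leq \<Phi>} = 2 * p * q * r"

text \<open>Automorphisms act on the right: Phi(ab) = (Phi a) b, so the paper's
product ab is the map "first a, then b", i.e. b composed with a.\<close>
definition amul :: "'a set \<Rightarrow> ('a \<Rightarrow> 'a) \<Rightarrow> ('a \<Rightarrow> 'a) \<Rightarrow> ('a \<Rightarrow> 'a)" where
  "amul P a b = b \<otimes>\<^bsub>BijGroup P\<^esub> a"

definition apow :: "'a set \<Rightarrow> ('a \<Rightarrow> 'a) \<Rightarrow> int \<Rightarrow> ('a \<Rightarrow> 'a)" where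
  "apow P a k = a [^]\<^bsub>BijGroup P\<^esub> k"

definition std_gens :: "'a set \<Rightarrow> ('a \<Rightarrow> 'a \<Rightarrow> bool) \<Rightarrow> 'a set \<Rightarrow>
    ('a \<Rightarrow> 'a) \<Rightarrow> ('a \<Rightarrow> 'a) \<Rightarrow> ('a \<Rightarrow> 'a) \<Rightarrow> bool" where
  "std_gens P leq \<Phi> s1 s2 s3 \<longleftrightarrow> is_flag P leq \<Phi> \<and>
     (\<forall>(i, s) \<in> {(1::int, s1), (2, s2), (3, s3)}.
        polytope_aut P leq s \<and> (\<exists>\<Psi>. flag_adj P leq \<Phi> i \<Psi> \<and> flag_adj P leq \<Psi> (i - 1) (s ` \<Phi>)))"

end

theory Submission
  imports Defs "HOL-Algebra.Generated_Groups"
begin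


lemma funpow_in: "f ` S \<subseteq> S \<Longrightarrow> x \<in> S \<Longrightarrow> (f ^^ k) x \<in> S"
  by (induction k) auto

lemma funpow_cancel: assumes inj: "inj_on f S" and fS: "f ` S \<subseteq> S" and x: "x \<in> S"
  and eq: "(f ^^ (a + d)) x = (f ^^ a) x" shows "(f ^^ d) x = x"
  using eq
proof (induction a)
  case 0 then show ?case by simp
next
  case (Suc a)
  have "f ((f ^^ (a + d)) x) = f ((f ^^ a) x)" using Suc.prems by (simp add: funpow_swap1)
  then have "(f ^^ (a + d)) x = (f ^^ a) x"
    using inj funpow_in[OF fS x] by (auto simp: inj_on_def)
  then show ?case using Suc.IH by simp
qed

lemma funpow_period_mod: assumes "(f ^^ N) x = x" shows "(f ^^ k) x = (f ^^ (k mod N)) x"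
proof -
  have "\<And>q. (f ^^ (q * N + r)) x = (f ^^ r) x" for r
  proof -
    fix q show "(f ^^ (q * N + r)) x = (f ^^ r) x"
    proof (induction q)
      case 0 then show ?case by simp
    next
      case (Suc q)
      have e: "Suc q * N + r = (q * N + r) + N" by simp
      have "(f ^^ (Suc q * N + r)) x = (f ^^ (q * N + r)) ((f ^^ N) x)"
        by (simp only: e funpow_add comp_apply)
      then show ?case using Suc assms by simp
    qed
  qed
  then show ?thesis by (metis div_mult_mod_eq)
qed

lemma orbit_period:
  assumes fin: "finite S" and fS: "f ` S \<subseteq> S" and inj: "inj_on f S" and x: "x \<in> S"
  shows "\<exists>N>0. (f ^^ N) x = x \<and> (\<forall>k. 0 < k \<and> k < N \<longrightarrow> (f ^^ k) x \<noteq> x)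
            \<and> card {(f ^^ k) x | k. True} = N"
proof -
  have "\<not> inj (\<lambda>k. (f ^^ k) x)"
  proof
    assume "inj (\<lambda>k. (f ^^ k) x)"
    then have "infinite (range (\<lambda>k. (f ^^ k) x))" by (simp add: finite_image_iff)
    moreover have "range (\<lambda>k. (f ^^ k) x) \<subseteq> S" using funpow_in[OF fS x] by auto
    ultimately show False using fin finite_subset by blast
  qed
  then obtain a b where ab: "a \<noteq> b" "(f ^^ a) x = (f ^^ b) x" by (auto simp: inj_def)
  have "\<exists>n>0. (f ^^ n) x = x"
  proof (cases "a < b")
    case True
    then have "(f ^^ (a + (b - a))) x = (f ^^ a) x" using ab by simp
    then have "(f ^^ (b - a)) x = x" by (rule funpow_cancel[OF inj fS x])
    moreover have "b - a > 0" using True by simp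
    ultimately show ?thesis by blast
  next
    case False
    then have "(f ^^ (b + (a - b))) x = (f ^^ b) x" using ab by simp
    then have "(f ^^ (a - b)) x = x" by (rule funpow_cancel[OF inj fS x])
    moreover have "a - b > 0" using False ab(1) by simp
    ultimately show ?thesis by blast
  qed
  define N where "N = (LEAST n. n > 0 \<and> (f ^^ n) x = x)"
  have N: "N > 0" "(f ^^ N) x = x" using LeastI_ex[OF \<open>\<exists>n>0. (f ^^ n) x = x\<close>] by (auto simp: N_def)
  have Nmin: "\<And>k. 0 < k \<Longrightarrow> k < N \<Longrightarrow> (f ^^ k) x \<noteq> x"
    using not_less_Least N_def by blast
  have orb: "{(f ^^ k) x | k. True} = (\<lambda>k. (f ^^ k) x) ` {..<N}"
  proof
    show "{(f ^^ k) x | k. True} \<subseteq> (\<lambda>k. (f ^^ k) x) ` {..<N}"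
    proof
      fix y assume "y \<in> {(f ^^ k) x | k. True}"
      then obtain k where "y = (f ^^ k) x" by blast
      then have "y = (f ^^ (k mod N)) x" using funpow_period_mod[OF N(2)] by simp
      moreover have "k mod N < N" using N(1) by simp
      ultimately show "y \<in> (\<lambda>k. (f ^^ k) x) ` {..<N}" by blast
    qed
  qed blast
  have "inj_on (\<lambda>k. (f ^^ k) x) {..<N}"
  proof (rule inj_onI)
    fix a b assume a: "a \<in> {..<N}" and b: "b \<in> {..<N}" and e: "(f ^^ a) x = (f ^^ b) x"
    show "a = b"
    proof (rule ccontr)
      assume "a \<noteq> b"
      then consider "a < b" | "b < a" by linarith
      then show False
      proof cases
        case 1
        then have "(f ^^ (a + (b - a))) x = (f ^^ a) x" using e by simp
        then have "(f ^^ (b - a)) x = x" by (rule funpow_cancel[OF inj fS x])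
        moreover have "b - a < N" "0 < b - a" using 1 b by auto
        ultimately show False using Nmin by blast
      next
        case 2
        then have "(f ^^ (b + (a - b))) x = (f ^^ b) x" using e by simp
        then have "(f ^^ (a - b)) x = x" by (rule funpow_cancel[OF inj fS x])
        moreover have "a - b < N" "0 < a - b" using 2 a by auto
        ultimately show False using Nmin by blast
      qed
    qed
  qed
  then have "card {(f ^^ k) x | k. True} = N" using orb by (simp add: card_image)
  then show ?thesis using N Nmin by blast
qed


context group begin

lemma cancel_l [simp]: "x \<in> carrier G \<Longrightarrow> y \<in> carrier G \<Longrightarrow> x \<otimes> (inv x \<otimes> y) = y"
  by (simp add: m_assoc [symmetric])
lemma cancel_l' [simp]: "x \<in> carrier G \<Longrightarrow> y \<in> carrier G \<Longrightarrow> inv x \<otimes> (x \<otimes> y) = y"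
  by (simp add: m_assoc [symmetric])

lemma lcancel: "x \<in> carrier G \<Longrightarrow> y \<in> carrier G \<Longrightarrow> z \<in> carrier G \<Longrightarrow> (x \<otimes> y = x \<otimes> z) = (y = z)"
  by (metis cancel_l' m_closed)

lemma pow_merge: "x \<in> carrier G \<Longrightarrow> x [^] (i::int) \<otimes> x [^] (j::int) = x [^] (i + j)"
  by (simp add: int_pow_mult)
lemma pow_merge': "x \<in> carrier G \<Longrightarrow> y \<in> carrier G \<Longrightarrow> x [^] (i::int) \<otimes> (x [^] (j::int) \<otimes> y) = x [^] (i + j) \<otimes> y"
  by (simp add: m_assoc [symmetric] pow_merge)

lemma conj_pow_nat: "g \<in> carrier G \<Longrightarrow> x \<in> carrier G \<Longrightarrow> (inv g \<otimes> x \<otimes> g) [^] (n::nat) = inv g \<otimes> x [^] n \<otimes> g"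
proof (induction n)
  case 0 then show ?case by simp
next
  case (Suc n)
  assume g: "g \<in> carrier G" and x: "x \<in> carrier G"
  have "(inv g \<otimes> x \<otimes> g) [^] Suc n = (inv g \<otimes> x [^] n \<otimes> g) \<otimes> (inv g \<otimes> x \<otimes> g)"
    using Suc g x by simp
  also have "\<dots> = inv g \<otimes> (x [^] n \<otimes> x) \<otimes> g"
    using g x by (simp add: m_assoc)
  finally show ?case using g x by simp
qed

lemma conj_pow: "g \<in> carrier G \<Longrightarrow> x \<in> carrier G \<Longrightarrow> (inv g \<otimes> x \<otimes> g) [^] (k::int) = inv g \<otimes> x [^] k \<otimes> g"
proof (cases "k \<ge> 0")
  case True
  assume g: "g \<in> carrier G" and x: "x \<in> carrier G"
  from True obtain n where "k = int n" by (metis nonneg_eq_int)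
  then show ?thesis using conj_pow_nat[OF g x] by (simp add: int_pow_int)
next
  case False
  assume g: "g \<in> carrier G" and x: "x \<in> carrier G"
  define n where "n = nat (-k)"
  with False have k: "k = - int n" by simp
  have "(inv g \<otimes> x \<otimes> g) [^] k = inv ((inv g \<otimes> x \<otimes> g) [^] n)" unfolding k by (rule int_pow_neg_int) (use g x in simp)
  also have "\<dots> = inv (inv g \<otimes> x [^] n \<otimes> g)" using conj_pow_nat[OF g x] by simp
  also have "\<dots> = inv g \<otimes> inv (x [^] n) \<otimes> g" using g x by (simp only: inv_mult_group m_assoc inv_closed nat_pow_closed m_closed inv_inv)
  also have "\<dots> = inv g \<otimes> x [^] k \<otimes> g" unfolding k using g x by (simp only: int_pow_neg_int)
  finally show ?thesis .
qed

lemma conj_pow': "g \<in> carrier G \<Longrightarrow> x \<in> carrier G \<Longrightarrow> (g \<otimes> x \<otimes> inv g) [^] (k::int) = g \<otimes> x [^] k \<otimes> inv g"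
  using conj_pow[of "inv g" x k] by simp

lemma pow_mod: assumes x: "x \<in> carrier G" and n: "x [^] (n::int) = \<one>"
  shows "x [^] (i::int) = x [^] (i mod n)"
proof -
  have "x [^] i = x [^] (i mod n + n * (i div n))" by simp
  also have "\<dots> = x [^] (i mod n) \<otimes> (x [^] n) [^] (i div n)"
    using x by (simp only: int_pow_mult int_pow_pow)
  also have "\<dots> = x [^] (i mod n)" using x n by simp
  finally show ?thesis .
qed

lemma pow_cong: assumes "x \<in> carrier G" "x [^] (n::int) = \<one>" "i mod n = j mod n"
  shows "x [^] (i::int) = x [^] j"
  using pow_mod[OF assms(1,2), of i] pow_mod[OF assms(1,2), of j] assms(3) by simp


lemma pow2: "x \<in> carrier G \<Longrightarrow> x [^] (2::int) = x \<otimes> x"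
proof -
  assume x: "x \<in> carrier G"
  have "x [^] (2::int) = x [^] (1 + 1::int)" by simp
  also have "\<dots> = x \<otimes> x" using x by (simp only: int_pow_mult int_pow_1)
  finally show ?thesis .
qed

lemma inv_pow: "x \<in> carrier G \<Longrightarrow> inv (x [^] (k::int)) = x [^] (-k)"
  by (simp add: int_pow_neg)

lemma inv_as_pow: "x \<in> carrier G \<Longrightarrow> inv x = x [^] (-1::int)"
  by (simp add: int_pow_neg)

lemma inv_eq_of: "x \<in> carrier G \<Longrightarrow> y \<in> carrier G \<Longrightarrow> x \<otimes> y = \<one> \<Longrightarrow> inv y = x"
  by (rule inv_equality)

lemma inv_eq_of': "x \<in> carrier G \<Longrightarrow> y \<in> carrier G \<Longrightarrow> x \<otimes> y = \<one> \<Longrightarrow> inv x = y"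
  by (metis inv_comm inv_equality)

lemma odd_pow: assumes x: "x \<in> carrier G" shows "x [^] (2 * t + 1::int) = (x \<otimes> x) [^] t \<otimes> x"
proof -
  have "x [^] (2 * t + 1::int) = x [^] (2 * t) \<otimes> x [^] (1::int)" using x by (simp only: int_pow_mult)
  also have "\<dots> = (x [^] (2::int)) [^] t \<otimes> x" using x by (simp add: int_pow_pow)
  finally show ?thesis using x by (simp add: pow2)
qed

lemma one_pow_mult: assumes x: "x \<in> carrier G" and n: "x [^] (n::int) = \<one>" shows "x [^] (n * k) = \<one>"
  using x n by (simp add: int_pow_pow[symmetric])

lemma pow_cong': assumes "x \<in> carrier G" "x [^] (n::int) = \<one>" "i = j + n * k"
  shows "x [^] (i::int) = x [^] j"
proof -
  have "x [^] i = x [^] j \<otimes> x [^] (n * k)" using assms by (simp only: int_pow_mult)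
  then show ?thesis using one_pow_mult[OF assms(1,2)] assms by simp
qed

end

context group begin

lemma common:
  fixes e :: int
  assumes a: "a \<in> carrier G" and b: "b \<in> carrier G" and c: "c \<in> carrier G"
  and E1: "a \<otimes> b \<otimes> a \<otimes> b = \<one>"
  and E2: "b \<otimes> c \<otimes> b \<otimes> c = \<one>"
  and E3: "a \<otimes> b \<otimes> c \<otimes> a \<otimes> b \<otimes> c = \<one>"
  and Bn: "b [^] (32*e) = \<one>"
  and R1: "inv b \<otimes> a = inv a \<otimes> b [^] (1 + 16*e)"
  shows "a \<otimes> (a \<otimes> (b \<otimes> (a \<otimes> a))) = b [^] (1 + 16*e)"
    and "\<And>k. inv a \<otimes> (b [^] (k::int) \<otimes> a) = (inv a \<otimes> (inv a \<otimes> inv b)) [^] k"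
    and "(inv a \<otimes> (inv a \<otimes> inv b)) \<otimes> (inv a \<otimes> (inv a \<otimes> inv b)) = b [^] (-(2 + 16*e))"
    and "\<And>k. inv a \<otimes> (c [^] (k::int) \<otimes> a) = b \<otimes> (c [^] (-k) \<otimes> inv b)"
    and "c \<otimes> (inv a \<otimes> (inv a \<otimes> inv c)) = b [^] (16*e) \<otimes> (inv a \<otimes> inv a)"
    and "c \<otimes> (b \<otimes> inv c) = inv b \<otimes> (inv c \<otimes> inv c)"
    and "b \<otimes> c = inv c \<otimes> inv b"
proof -
  note carr = a b c
  have S1: "a \<otimes> (b \<otimes> a) = inv b"
    using inv_equality[OF E1] carr by (simp add: m_assoc)
  have S1': "b \<otimes> a = inv a \<otimes> inv b"
    using S1 carr by (metis inv_solve_left m_closed inv_closed)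
  have "a \<otimes> (inv b \<otimes> a) = b [^] (1 + 16*e)"
    using R1 carr by simp
  then show S3: "a \<otimes> (a \<otimes> (b \<otimes> (a \<otimes> a))) = b [^] (1 + 16*e)"
    using carr by (simp add: S1[symmetric] m_assoc)
  have S2: "inv a \<otimes> (b \<otimes> a) = inv a \<otimes> (inv a \<otimes> inv b)"
    using carr S1' by simp
  show "\<And>k. inv a \<otimes> (b [^] (k::int) \<otimes> a) = (inv a \<otimes> (inv a \<otimes> inv b)) [^] k"
    using conj_pow[OF a b] S2 carr by (simp add: m_assoc)
  have S3i: "inv a \<otimes> (inv a \<otimes> (inv b \<otimes> (inv a \<otimes> inv a))) = b [^] (-(1 + 16*e))"
  proof -
    have "inv (a \<otimes> (a \<otimes> (b \<otimes> (a \<otimes> a)))) = inv (b [^] (1 + 16*e))" using S3 by simp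
    then show ?thesis using carr by (simp add: inv_mult_group m_assoc inv_pow)
  qed
  have "(inv a \<otimes> (inv a \<otimes> inv b)) \<otimes> (inv a \<otimes> (inv a \<otimes> inv b))
      = (inv a \<otimes> (inv a \<otimes> (inv b \<otimes> (inv a \<otimes> inv a)))) \<otimes> inv b"
    using carr by (simp add: m_assoc)
  also have "\<dots> = b [^] (-(1 + 16*e)) \<otimes> b [^] (-1::int)" using S3i carr by (simp add: inv_as_pow)
  also have "\<dots> = b [^] (-(2 + 16*e))" using carr by (simp add: pow_merge)
  finally show "(inv a \<otimes> (inv a \<otimes> inv b)) \<otimes> (inv a \<otimes> (inv a \<otimes> inv b)) = b [^] (-(2 + 16*e))" .
  have xx: "(a \<otimes> b) \<otimes> (a \<otimes> b) = \<one>" using E1 carr by (simp add: m_assoc)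
  have ix: "inv (a \<otimes> b) = a \<otimes> b" using inv_eq_of[OF _ _ xx] carr by simp
  have "inv c = (a \<otimes> b) \<otimes> c \<otimes> (a \<otimes> b)"
    using inv_eq_of[of "(a \<otimes> b) \<otimes> c \<otimes> (a \<otimes> b)" c] E3 carr by (simp add: m_assoc)
  then have ic: "inv c = a \<otimes> (b \<otimes> (c \<otimes> (a \<otimes> b)))" using carr by (simp add: m_assoc)
  have xx': "\<And>y. y \<in> carrier G \<Longrightarrow> a \<otimes> (b \<otimes> (a \<otimes> (b \<otimes> y))) = y"
    using xx carr by (simp add: m_assoc[symmetric])
  have "(a \<otimes> b) \<otimes> inv c = c \<otimes> (a \<otimes> b)"
    using carr by (simp add: ic m_assoc xx')
  then have E3': "c \<otimes> (a \<otimes> (b \<otimes> c)) = a \<otimes> b"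
    using carr by (metis m_assoc m_closed inv_closed l_inv r_one)
  have "(c \<otimes> a) \<otimes> (b \<otimes> c) = (a \<otimes> (b \<otimes> (inv c \<otimes> inv b))) \<otimes> (b \<otimes> c)"
    using carr E3' by (simp add: m_assoc)
  then have "c \<otimes> a = a \<otimes> (b \<otimes> (inv c \<otimes> inv b))" using carr by simp
  then have S6: "inv a \<otimes> (c \<otimes> a) = b \<otimes> (inv c \<otimes> inv b)"
    using carr by simp
  show "\<And>k. inv a \<otimes> (c [^] (k::int) \<otimes> a) = b \<otimes> (c [^] (-k) \<otimes> inv b)"
  proof -
    fix k :: int
    have "inv a \<otimes> (c [^] k \<otimes> a) = (inv a \<otimes> c \<otimes> a) [^] k" using conj_pow[OF a c] carr by (simp add: m_assoc)
    also have "\<dots> = (inv (inv b) \<otimes> inv c \<otimes> inv b) [^] k" using S6 carr by (simp add: m_assoc)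
    also have "\<dots> = inv (inv b) \<otimes> (inv c) [^] k \<otimes> inv b" by (rule conj_pow) (simp_all add: carr)
    also have "\<dots> = b \<otimes> (c [^] (-k) \<otimes> inv b)" using carr by (simp add: m_assoc int_pow_inv inv_pow)
    finally show "inv a \<otimes> (c [^] k \<otimes> a) = b \<otimes> (c [^] (-k) \<otimes> inv b)" .
  qed
  have yy: "(b \<otimes> c) \<otimes> (b \<otimes> c) = \<one>" using E2 carr by (simp add: m_assoc)
  then have "inv (b \<otimes> c) = b \<otimes> c" using inv_eq_of[OF _ _ yy] carr by simp
  then show E2': "b \<otimes> c = inv c \<otimes> inv b" using carr by (simp add: inv_mult_group)
  have bcb: "c \<otimes> (b \<otimes> c) = inv b" using inv_eq_of'[of b "c \<otimes> (b \<otimes> c)"] yy carr by (simp add: m_assoc)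
  have bcb': "b \<otimes> (c \<otimes> b) = inv c" using inv_eq_of[of "b \<otimes> (c \<otimes> b)" c] yy carr by (simp add: m_assoc)
  have bcbc: "\<And>w. w \<in> carrier G \<Longrightarrow> b \<otimes> (c \<otimes> (b \<otimes> w)) = inv c \<otimes> w"
    using bcb' carr by (simp add: m_assoc[symmetric])
  have "c \<otimes> (b \<otimes> inv c) = (c \<otimes> (b \<otimes> c)) \<otimes> (inv c \<otimes> inv c)" using carr by (simp add: m_assoc)
  then show "c \<otimes> (b \<otimes> inv c) = inv b \<otimes> (inv c \<otimes> inv c)" using bcb by simp
  have "a \<otimes> ((b \<otimes> c) \<otimes> a \<otimes> (b \<otimes> c)) = \<one>" using E3 carr by (simp add: m_assoc)
  then have ia: "inv a = (b \<otimes> c) \<otimes> a \<otimes> (b \<otimes> c)" using inv_eq_of'[of a] carr by simp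
  have yy': "\<And>w. w \<in> carrier G \<Longrightarrow> b \<otimes> (c \<otimes> (b \<otimes> (c \<otimes> w))) = w"
    using yy carr by (simp add: m_assoc[symmetric])
  have "inv a \<otimes> inv a = b \<otimes> (c \<otimes> (a \<otimes> (a \<otimes> (b \<otimes> c))))"
    by (simp add: ia carr m_assoc yy')
  have S3c: "\<And>w. w \<in> carrier G \<Longrightarrow> a \<otimes> (a \<otimes> (b \<otimes> w)) = b [^] (1 + 16*e) \<otimes> (inv a \<otimes> (inv a \<otimes> w))"
  proof -
    fix w assume w: "w \<in> carrier G"
    have "a \<otimes> (a \<otimes> (b \<otimes> w)) = (a \<otimes> (a \<otimes> (b \<otimes> (a \<otimes> a)))) \<otimes> (inv a \<otimes> (inv a \<otimes> w))"
      using carr w by (simp add: m_assoc)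
    then show "a \<otimes> (a \<otimes> (b \<otimes> w)) = b [^] (1 + 16*e) \<otimes> (inv a \<otimes> (inv a \<otimes> w))" using S3 by simp
  qed
  have b1: "b [^] (1 + 16*e) = b \<otimes> b [^] (16*e)" using carr by (simp add: int_pow_mult)
  have "inv a \<otimes> inv a = inv c \<otimes> (b [^] (16*e) \<otimes> (inv a \<otimes> (inv a \<otimes> c)))"
    using \<open>inv a \<otimes> inv a = b \<otimes> (c \<otimes> (a \<otimes> (a \<otimes> (b \<otimes> c))))\<close> carr
    by (simp add: S3c b1 m_assoc bcbc)
  then have h: "c \<otimes> (inv a \<otimes> inv a) = b [^] (16*e) \<otimes> (inv a \<otimes> (inv a \<otimes> c))"
    using carr by simp
  have "c \<otimes> (inv a \<otimes> (inv a \<otimes> inv c)) = (c \<otimes> (inv a \<otimes> inv a)) \<otimes> inv c" using carr by (simp add: m_assoc)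
  also have "\<dots> = b [^] (16*e) \<otimes> (inv a \<otimes> inv a)" using carr by (simp add: h m_assoc)
  finally show "c \<otimes> (inv a \<otimes> (inv a \<otimes> inv c)) = b [^] (16*e) \<otimes> (inv a \<otimes> inv a)" .
qed
end

context group begin

lemma partA:
  fixes e \<epsilon> :: int
  assumes a: "a \<in> carrier G" and b: "b \<in> carrier G" and c: "c \<in> carrier G"
  and eps: "\<epsilon> = 1 \<or> \<epsilon> = -1"
  and E1: "a \<otimes> b \<otimes> a \<otimes> b = \<one>"
  and E2: "b \<otimes> c \<otimes> b \<otimes> c = \<one>"
  and E3: "a \<otimes> b \<otimes> c \<otimes> a \<otimes> b \<otimes> c = \<one>"
  and Bn: "b [^] (32*e) = \<one>"
  and C8: "c [^] (8::int) = \<one>"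
  and R1: "inv b \<otimes> a = inv a \<otimes> b [^] (1 + 16*e)"
  and R2: "b \<otimes> c [^] (2::int) = c [^] (2::int) \<otimes> b [^] (1 + \<epsilon> * (8*e))"
  shows "b [^] (16*e) = \<one>"
proof -
  note carr = a b c
  note C = common[OF a b c E1 E2 E3 Bn R1]
  define m where "m = 1 + \<epsilon> * (8*e)"
  define u where "u = inv a \<otimes> (inv a \<otimes> inv b)"
  define z where "z = b [^] (16*e)"
  have u: "u \<in> carrier G" using carr by (simp add: u_def)
  have z: "z \<in> carrier G" using carr by (simp add: z_def)
  have zz: "z \<otimes> z = \<one>" using Bn b by (simp add: z_def pow_merge)
  have ic2: "inv (c [^] (2::int)) = c [^] (-2::int)" using c by (simp add: inv_pow)
  have T1: "c [^] (-2::int) \<otimes> (b \<otimes> c [^] (2::int)) = b [^] m"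
    using R2 carr by (simp add: m_def ic2[symmetric])
  have T1k: "\<And>j. c [^] (-2::int) \<otimes> (b [^] (j::int) \<otimes> c [^] (2::int)) = b [^] (m * j)"
  proof -
    fix j :: int
    have "c [^] (-2::int) \<otimes> (b [^] j \<otimes> c [^] (2::int)) = (inv (c [^] (2::int)) \<otimes> b \<otimes> c [^] (2::int)) [^] j"
      using conj_pow[of "c [^] (2::int)" b j] carr by (simp add: ic2 m_assoc)
    also have "\<dots> = (b [^] m) [^] j" using T1 carr by (simp add: ic2 m_assoc)
    finally show "c [^] (-2::int) \<otimes> (b [^] j \<otimes> c [^] (2::int)) = b [^] (m * j)" using b by (simp add: int_pow_pow)
  qed
  have T2: "u [^] m = b [^] (-(8*\<epsilon>*e)) \<otimes> u"
  proof -
    have "u [^] m = u [^] (2 * (4*\<epsilon>*e) + 1)" by (simp add: m_def algebra_simps)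
    also have "\<dots> = (u \<otimes> u) [^] (4*\<epsilon>*e) \<otimes> u" using u by (rule odd_pow)
    also have "\<dots> = b [^] (-(2 + 16*e) * (4*\<epsilon>*e)) \<otimes> u" using C(3) b by (simp add: u_def int_pow_pow)
    also have "\<dots> = b [^] (-(8*\<epsilon>*e)) \<otimes> u"
      using pow_cong'[OF b Bn, of "-(2 + 16*e) * (4*\<epsilon>*e)" "-(8*\<epsilon>*e)" "-2*\<epsilon>*e"]
      by (simp add: algebra_simps)
    finally show ?thesis .
  qed
  have T4: "b [^] (-(8*\<epsilon>*e)) \<otimes> u = b \<otimes> (c [^] (2::int) \<otimes> (inv b \<otimes> (inv a \<otimes> (inv a \<otimes> (c [^] (-2::int) \<otimes> inv b)))))"
  proof -
    have "inv a \<otimes> (b [^] m \<otimes> a) = inv a \<otimes> ((c [^] (-2::int) \<otimes> (b \<otimes> c [^] (2::int))) \<otimes> a)" using T1 by simp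
    also have "\<dots> = (inv a \<otimes> (c [^] (-2::int) \<otimes> a)) \<otimes> ((inv a \<otimes> (b \<otimes> a)) \<otimes> (inv a \<otimes> (c [^] (2::int) \<otimes> a)))"
      using carr by (simp add: m_assoc)
    also have "\<dots> = (b \<otimes> (c [^] (2::int) \<otimes> inv b)) \<otimes> (u \<otimes> (b \<otimes> (c [^] (-2::int) \<otimes> inv b)))"
      using C(2)[of 1] C(4)[of "-2"] C(4)[of 2] carr by (simp add: u_def)
    also have "\<dots> = b \<otimes> (c [^] (2::int) \<otimes> (inv b \<otimes> (inv a \<otimes> (inv a \<otimes> (c [^] (-2::int) \<otimes> inv b)))))"
      using carr by (simp add: u_def m_assoc)
    finally show ?thesis using C(2)[of m] T2 by (simp add: u_def)
  qed
  have T5: "c [^] (2::int) \<otimes> (inv b \<otimes> (inv a \<otimes> (inv a \<otimes> c [^] (-2::int)))) = b [^] (-m) \<otimes> (inv a \<otimes> inv a)"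
  proof -
    let ?W = "c [^] (2::int) \<otimes> (inv b \<otimes> (inv a \<otimes> (inv a \<otimes> c [^] (-2::int))))"
    have "(b \<otimes> ?W) \<otimes> inv b = (b [^] (-(8*\<epsilon>*e)) \<otimes> (inv a \<otimes> inv a)) \<otimes> inv b"
      using T4 carr by (simp add: u_def m_assoc)
    then have "b \<otimes> ?W = b [^] (-(8*\<epsilon>*e)) \<otimes> (inv a \<otimes> inv a)" using carr by simp
    then have "?W = inv b \<otimes> (b [^] (-(8*\<epsilon>*e)) \<otimes> (inv a \<otimes> inv a))"
      using carr by (metis inv_solve_left m_closed int_pow_closed inv_closed)
    also have "\<dots> = (b [^] (-1::int) \<otimes> b [^] (-(8*\<epsilon>*e))) \<otimes> (inv a \<otimes> inv a)"
      using carr by (simp add: inv_as_pow m_assoc)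
    also have "\<dots> = b [^] (-m) \<otimes> (inv a \<otimes> inv a)" using carr by (simp add: pow_merge m_def algebra_simps)
    finally show ?thesis .
  qed
  have T6: "c \<otimes> (z \<otimes> inv c) = z"
  proof -
    define v where "v = inv b \<otimes> c [^] (-2::int)"
    have v: "v \<in> carrier G" using carr by (simp add: v_def)
    have icic: "inv c \<otimes> inv c = c [^] (-2::int)" using c by (simp add: inv_as_pow pow_merge)
    have cbc: "c \<otimes> b \<otimes> inv c = v" using C(6) carr by (simp add: m_assoc icic v_def)
    have "c \<otimes> (z \<otimes> inv c) = v [^] (16*e)"
      using conj_pow'[OF c b, of "16*e"] cbc carr by (simp add: z_def m_assoc)
    have cc0: "c [^] (2::int) \<otimes> c [^] (-2::int) = \<one>" using c by (simp add: pow_merge)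
    have cb: "c [^] (-2::int) \<otimes> inv b = b [^] (-m) \<otimes> c [^] (-2::int)"
    proof -
      have "c [^] (-2::int) \<otimes> inv b = (c [^] (-2::int) \<otimes> (b [^] (-1::int) \<otimes> c [^] (2::int))) \<otimes> c [^] (-2::int)"
        using carr cc0 by (simp add: m_assoc inv_as_pow)
      then show ?thesis using T1k[of "-1"] by simp
    qed
    have vv: "v \<otimes> v = b [^] (-1 - m) \<otimes> c [^] (-4::int)"
    proof -
      have "v \<otimes> v = inv b \<otimes> ((c [^] (-2::int) \<otimes> inv b) \<otimes> c [^] (-2::int))" using carr by (simp add: v_def m_assoc)
      also have "\<dots> = (b [^] (-1::int) \<otimes> b [^] (-m)) \<otimes> (c [^] (-2::int) \<otimes> c [^] (-2::int))"
        unfolding cb using carr by (simp add: m_assoc inv_as_pow)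
      also have "\<dots> = b [^] (-1 - m) \<otimes> c [^] (-4::int)" using carr by (simp add: pow_merge)
      finally show ?thesis .
    qed
    have c4s: "c [^] (4::int) = c [^] (2::int) \<otimes> c [^] (2::int)" "c [^] (-4::int) = c [^] (-2::int) \<otimes> c [^] (-2::int)"
      using c by (simp_all add: pow_merge)
    have c4: "\<And>j. c [^] (-4::int) \<otimes> (b [^] (j::int) \<otimes> c [^] (4::int)) = b [^] (m * (m * j))"
    proof -
      fix j :: int
      have "c [^] (-4::int) \<otimes> (b [^] (j::int) \<otimes> c [^] (4::int))
          = c [^] (-2::int) \<otimes> ((c [^] (-2::int) \<otimes> (b [^] j \<otimes> c [^] (2::int))) \<otimes> c [^] (2::int))"
        using carr by (simp add: m_assoc c4s)
      then show "c [^] (-4::int) \<otimes> (b [^] (j::int) \<otimes> c [^] (4::int)) = b [^] (m * (m * j))"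
        using T1k by simp
    qed
    have c8: "c [^] (-8::int) = \<one>" using C8 c by (simp add: inv_pow[symmetric])
    have v4: "(v \<otimes> v) \<otimes> (v \<otimes> v) = b [^] ((-1 - m) * (1 + m * m))"
    proof -
      have "(v \<otimes> v) \<otimes> (v \<otimes> v) = b [^] (-1 - m) \<otimes> ((c [^] (-4::int) \<otimes> (b [^] (-1 - m) \<otimes> c [^] (4::int))) \<otimes> c [^] (-8::int))"
        using carr by (simp add: vv m_assoc pow_merge)
      also have "\<dots> = b [^] (-1 - m) \<otimes> b [^] (m * (m * (-1 - m)))" using c4 c8 carr by simp
      also have "\<dots> = b [^] ((-1 - m) * (1 + m * m))" using b by (simp add: pow_merge algebra_simps)
      finally show ?thesis .
    qed
    have "v [^] (16*e) = ((v \<otimes> v) \<otimes> (v \<otimes> v)) [^] (4*e)"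
    proof -
      have "v [^] (16*e) = ((v [^] (2::int)) [^] (2::int)) [^] (4*e)" using v by (simp add: int_pow_pow)
      then show ?thesis using v by (simp add: pow2)
    qed
    also have "\<dots> = b [^] ((-1 - m) * (1 + m * m) * (4*e))" using v4 b by (simp add: int_pow_pow)
    also have "\<dots> = z" unfolding z_def
      by (rule pow_cong'[OF b Bn, where k="-1 - 6*\<epsilon>*e - 32*\<epsilon>^2*e^2 - 64*\<epsilon>^3*e^3"])
         (simp add: m_def algebra_simps power2_eq_square power3_eq_cube)
    finally show ?thesis using \<open>c \<otimes> (z \<otimes> inv c) = v [^] (16*e)\<close> by simp
  qed
  have ic2': "inv c \<otimes> inv c = c [^] (-2::int)" using c by (simp add: inv_as_pow pow_merge)
  have c2: "c [^] (2::int) = c \<otimes> c" using c by (simp add: pow2)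
  have T7: "c [^] (2::int) \<otimes> (inv a \<otimes> (inv a \<otimes> c [^] (-2::int))) = inv a \<otimes> inv a"
  proof -
    have "c [^] (2::int) \<otimes> (inv a \<otimes> (inv a \<otimes> c [^] (-2::int))) = c \<otimes> ((c \<otimes> (inv a \<otimes> (inv a \<otimes> inv c))) \<otimes> inv c)"
      using carr by (simp add: c2 ic2'[symmetric] m_assoc)
    also have "\<dots> = c \<otimes> ((z \<otimes> (inv a \<otimes> inv a)) \<otimes> inv c)" by (simp only: C(5) z_def)
    also have "\<dots> = (c \<otimes> (z \<otimes> inv c)) \<otimes> (c \<otimes> (inv a \<otimes> (inv a \<otimes> inv c)))"
      using carr z by (simp add: m_assoc)
    also have "\<dots> = z \<otimes> (z \<otimes> (inv a \<otimes> inv a))" using carr z by (simp only: T6 C(5) z_def[symmetric] m_assoc)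
    also have "\<dots> = (z \<otimes> z) \<otimes> (inv a \<otimes> inv a)" using carr z by (simp add: m_assoc)
    also have "\<dots> = inv a \<otimes> inv a" using carr zz by simp
    finally show ?thesis .
  qed
  have cc0: "c [^] (-2::int) \<otimes> c [^] (2::int) = \<one>" using c by (simp add: pow_merge)
  have T8: "c [^] (2::int) \<otimes> (inv b \<otimes> c [^] (-2::int)) = b [^] (-m)"
  proof -
    have "(c [^] (2::int) \<otimes> (inv b \<otimes> c [^] (-2::int))) \<otimes> (inv a \<otimes> inv a)
        = c [^] (2::int) \<otimes> (inv b \<otimes> (c [^] (-2::int) \<otimes> (c [^] (2::int) \<otimes> (inv a \<otimes> (inv a \<otimes> c [^] (-2::int))))))"
      using carr by (simp add: T7 m_assoc)
    also have "\<dots> = b [^] (-m) \<otimes> (inv a \<otimes> inv a)" using carr T5 by (simp add: m_assoc[symmetric] cc0)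
    finally show ?thesis using carr by simp
  qed
  have T9: "b [^] (-1::int) = b [^] (-(m * m))"
  proof -
    have "b [^] (-1::int) = c [^] (2::int) \<otimes> ((c [^] (-2::int) \<otimes> (b [^] (-1::int) \<otimes> c [^] (2::int))) \<otimes> c [^] (-2::int))"
      using carr by (simp add: m_assoc ic2[symmetric])
    also have "\<dots> = c [^] (2::int) \<otimes> (b [^] (-m) \<otimes> c [^] (-2::int))" using T1k[of "-1"] by simp
    also have "\<dots> = (c [^] (2::int) \<otimes> b [^] (-1::int) \<otimes> inv (c [^] (2::int))) [^] m"
      using conj_pow'[of "c [^] (2::int)" "b [^] (-1::int)" m] carr by (simp add: int_pow_pow ic2 m_assoc)
    also have "\<dots> = b [^] (-(m * m))" using T8 carr by (simp add: ic2 m_assoc inv_as_pow int_pow_pow)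
    finally show ?thesis .
  qed
  have "b [^] (m * m - 1) = \<one>"
  proof -
    have "b [^] (m * m - 1) = b [^] (m * m) \<otimes> b [^] (-1::int)" using b by (simp add: pow_merge)
    also have "\<dots> = \<one>" using T9 b by (simp add: pow_merge)
    finally show ?thesis .
  qed
  moreover have "b [^] (16*e) = b [^] (m * m - 1)"
    using eps
  proof
    assume "\<epsilon> = 1"
    then show ?thesis by (intro pow_cong'[OF b Bn, where k="-2*e"]) (simp add: m_def algebra_simps)
  next
    assume "\<epsilon> = -1"
    then show ?thesis by (intro pow_cong'[OF b Bn, where k="1-2*e"]) (simp add: m_def algebra_simps)
  qed
  ultimately show ?thesis by simp
qed
end


lemma odd_inverse: fixes k :: int assumes "odd k" shows "\<exists>s t. k * s = 1 + (32 * 2 ^ i) * t"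
proof -
  have "coprime k (2 ^ (i + 5))" using assms by simp
  then have g: "gcd k (2 ^ (i + 5)) = 1" by (simp add: coprime_iff_gcd_eq_1)
  obtain u v where "u * k + v * 2 ^ (i + 5) = gcd k (2 ^ (i + 5))" using bezout_int by blast
  with g have "k * u = 1 + (32 * 2 ^ i) * (- v)" by (simp add: power_add algebra_simps)
  then show ?thesis by blast
qed

context group begin

lemma comm_pow_nat:
  assumes x: "x \<in> carrier G" and c: "c \<in> carrier G" and z: "z \<in> carrier G"
  and h: "x \<otimes> c = z \<otimes> c \<otimes> x" and zc: "z \<otimes> c = c \<otimes> z"
  shows "x \<otimes> c [^] (n::nat) = z [^] n \<otimes> c [^] n \<otimes> x"
proof (induction n)
  case 0 then show ?case using x by simp
next
  case (Suc n)
  have zcn: "z \<otimes> c [^] n = c [^] n \<otimes> z" using zc z c by (simp add: group_commutes_pow)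
  have "x \<otimes> c [^] Suc n = (x \<otimes> c [^] n) \<otimes> c" using x c by (simp add: m_assoc)
  also have "\<dots> = z [^] n \<otimes> (c [^] n \<otimes> (x \<otimes> c))" using Suc x c z by (simp add: m_assoc)
  also have "\<dots> = z [^] n \<otimes> ((c [^] n \<otimes> z) \<otimes> c \<otimes> x)" using h x c z by (simp add: m_assoc)
  also have "\<dots> = z [^] n \<otimes> ((z \<otimes> c [^] n) \<otimes> c \<otimes> x)" using zcn by simp
  also have "\<dots> = z [^] Suc n \<otimes> c [^] Suc n \<otimes> x" using x c z by (simp add: m_assoc)
  finally show ?case .
qed


lemma partB:
  fixes e \<epsilon> :: int and i :: nat
  assumes a: "a \<in> carrier G" and b: "b \<in> carrier G" and c: "c \<in> carrier G"
  and ei: "e = 2 ^ i"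
  and eps: "\<epsilon> = 1 \<or> \<epsilon> = -1"
  and E1: "a \<otimes> b \<otimes> a \<otimes> b = \<one>"
  and E2: "b \<otimes> c \<otimes> b \<otimes> c = \<one>"
  and E3: "a \<otimes> b \<otimes> c \<otimes> a \<otimes> b \<otimes> c = \<one>"
  and Bn: "b [^] (32*e) = \<one>"
  and C16: "c [^] (16*e) = \<one>"
  and R1: "inv b \<otimes> a = inv a \<otimes> b [^] (1 + 16*e)"
  and R3: "inv c \<otimes> b = b [^] (3 + \<epsilon> * (8*e)) \<otimes> c [^] (1 - 8*e)"
  and R4: "c \<otimes> inv b = b [^] (-3 + \<epsilon> * (8*e)) \<otimes> c [^] (-1 + 8*e)"
  shows "b [^] (16*e) = \<one>"
proof -
  note carr = a b c
  note C = common[OF a b c E1 E2 E3 Bn R1]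
  define k where "k = 3 + \<epsilon> * (8*e)"
  define k' where "k' = 3 - \<epsilon> * (8*e)"
  define f where "f = c [^] (8*e)"
  define u where "u = inv a \<otimes> (inv a \<otimes> inv b)"
  define z where "z = b [^] (16*e)"
  have e1: "e \<ge> 1" using ei by simp
  have u: "u \<in> carrier G" using carr by (simp add: u_def)
  have z: "z \<in> carrier G" using carr by (simp add: z_def)
  have f: "f \<in> carrier G" using carr by (simp add: f_def)
  have zz: "z \<otimes> z = \<one>" using Bn b by (simp add: z_def pow_merge)
  have iz: "inv z = z" using zz z by (metis inv_eq_of)
  have ff: "f \<otimes> f = \<one>" using C16 c by (simp add: f_def pow_merge)
  have iff: "inv f = f" using ff f by (metis inv_eq_of)
  have bz: "b \<otimes> z = b [^] (1 + 16*e)" using pow_merge[OF b, of 1 "16*e"] b by (simp add: z_def)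
  have B1: "f \<otimes> b [^] k \<otimes> inv f = b [^] k'"
  proof -
    have "c \<otimes> (inv c \<otimes> b) = c \<otimes> (b [^] k \<otimes> c [^] (1 - 8*e))" using R3 by (simp only: k_def)
    then have X1: "b = c \<otimes> (b [^] k \<otimes> c [^] (1 - 8*e))" using carr by simp
    have "inv (c \<otimes> inv b) = inv (b [^] (-k') \<otimes> c [^] (-(1 - 8*e)))" using R4 by (simp add: k'_def algebra_simps)
    then have "b \<otimes> inv c = c [^] (1 - 8*e) \<otimes> b [^] k'" using carr by (simp only: inv_mult_group inv_closed int_pow_closed inv_inv inv_pow minus_minus)
    then have "(b \<otimes> inv c) \<otimes> c = (c [^] (1 - 8*e) \<otimes> b [^] k') \<otimes> c" by simp
    then have X2: "b = c [^] (1 - 8*e) \<otimes> (b [^] k' \<otimes> c)" using carr by (simp add: m_assoc)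
    have fd: "f = c [^] (-(1 - 8*e)) \<otimes> c" using pow_merge[OF c, of "-(1 - 8*e)" 1] c by (simp add: f_def)
    have ifd: "inv f = c [^] (1 - 8*e) \<otimes> inv c"
    proof -
      have "c [^] (1 - 8*e) \<otimes> inv c = c [^] (-(8*e))" using pow_merge[OF c, of "1 - 8*e" "-1"] c by (simp add: inv_as_pow)
      then show ?thesis using c by (simp add: f_def inv_pow)
    qed
    have "f \<otimes> b [^] k \<otimes> inv f = c [^] (-(1 - 8*e)) \<otimes> ((c \<otimes> (b [^] k \<otimes> c [^] (1 - 8*e))) \<otimes> inv c)"
      unfolding ifd using carr by (simp add: fd m_assoc)
    also have "\<dots> = c [^] (-(1 - 8*e)) \<otimes> ((c [^] (1 - 8*e) \<otimes> (b [^] k' \<otimes> c)) \<otimes> inv c)"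
      using X1 X2 by simp
    also have "\<dots> = b [^] k'" using carr by (simp add: m_assoc pow_merge')
    finally show ?thesis .
  qed
  have B2: "f \<otimes> b \<otimes> inv f = b \<otimes> z"
  proof -
    have "odd k" unfolding k_def by simp
    then obtain s t where st: "k * s = 1 + (32 * 2 ^ i) * t" using odd_inverse by blast
    then have "odd (k * s)" by simp
    then have "odd s" by simp
    then obtain w where w: "s = 2 * w + 1" by (metis oddE)
    have "b = b [^] (k * s)" using pow_cong'[OF b Bn, of "k * s" 1 t] st ei b by simp
    then have "f \<otimes> b \<otimes> inv f = f \<otimes> (b [^] k) [^] s \<otimes> inv f" using b by (simp add: int_pow_pow)
    also have "\<dots> = (f \<otimes> b [^] k \<otimes> inv f) [^] s" using f b by (simp add: conj_pow')
    also have "\<dots> = b [^] (k' * s)" using B1 b by (simp add: int_pow_pow)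
    also have "\<dots> = b [^] (1 + 16*e)"
      using eps
    proof
      assume "\<epsilon> = 1"
      then show ?thesis using st ei
        by (intro pow_cong'[OF b Bn, where k="t - w - 1"]) (simp add: k_def k'_def w algebra_simps)
    next
      assume "\<epsilon> = -1"
      then show ?thesis using st ei
        by (intro pow_cong'[OF b Bn, where k="t + w"]) (simp add: k_def k'_def w algebra_simps)
    qed
    finally show ?thesis using bz by simp
  qed
  have ifd: "inv f = c [^] (1 - 8*e) \<otimes> inv c"
  proof -
    have "c [^] (1 - 8*e) \<otimes> inv c = c [^] (-(8*e))" using pow_merge[OF c, of "1 - 8*e" "-1"] c by (simp add: inv_as_pow)
    then show ?thesis using c by (simp add: f_def inv_pow)
  qed
  have fbj: "\<And>j. f \<otimes> b [^] (j::int) = b [^] ((1 + 16*e) * j) \<otimes> f"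
  proof -
    fix j :: int
    have "f \<otimes> b [^] j \<otimes> inv f = b [^] ((1 + 16*e) * j)"
      using conj_pow'[OF f b, of j] B2 bz b by (simp add: int_pow_pow)
    then have "(f \<otimes> b [^] j \<otimes> inv f) \<otimes> f = b [^] ((1 + 16*e) * j) \<otimes> f" by simp
    then show "f \<otimes> b [^] j = b [^] ((1 + 16*e) * j) \<otimes> f" using f b by (simp add: m_assoc)
  qed
  define P where "P = inv c \<otimes> (b \<otimes> (b \<otimes> c))"
  have PP: "P \<otimes> P = b [^] ((k - 1 - 16*e) * (2 + 16*e))"
  proof -
    have "inv c \<otimes> (b \<otimes> inv c) = b [^] k \<otimes> inv f"
    proof -
      have "inv c \<otimes> (b \<otimes> inv c) = (inv c \<otimes> b) \<otimes> inv c" using carr by (simp add: m_assoc)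
      also have "\<dots> = b [^] k \<otimes> inv f" using R3 carr by (simp add: ifd k_def m_assoc)
      finally show ?thesis .
    qed
    moreover have "c \<otimes> (b \<otimes> c) = inv b" using C(7) carr by simp
    moreover have "P = (inv c \<otimes> (b \<otimes> inv c)) \<otimes> (c \<otimes> (b \<otimes> c))" using carr by (simp add: P_def m_assoc)
    ultimately have "P = b [^] k \<otimes> (f \<otimes> b [^] (-1::int))" using carr f by (simp add: iff m_assoc inv_as_pow)
    also have "\<dots> = b [^] (k - 1 - 16*e) \<otimes> f" using fbj[of "-1"] b f by (simp add: pow_merge' algebra_simps)
    finally have P1: "P = b [^] (k - 1 - 16*e) \<otimes> f" .
    have "P \<otimes> P = b [^] (k - 1 - 16*e) \<otimes> ((f \<otimes> b [^] (k - 1 - 16*e)) \<otimes> f)" using b f by (simp add: P1 m_assoc)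
    also have "\<dots> = b [^] ((k - 1 - 16*e) * (2 + 16*e))" using fbj b f ff by (simp add: m_assoc pow_merge' pow_merge algebra_simps)
    finally show ?thesis .
  qed
  have B7: "c \<otimes> z = z \<otimes> c"
  proof -
    have P2: "P = (inv c \<otimes> b \<otimes> c) [^] (2::int)" using carr by (simp add: P_def pow2 m_assoc)
    have "inv c \<otimes> z \<otimes> c = (inv c \<otimes> b \<otimes> c) [^] (16*e)" using conj_pow[OF c b] by (simp add: z_def)
    also have "\<dots> = (((inv c \<otimes> b \<otimes> c) [^] (2::int)) [^] (2::int)) [^] (4*e)" using carr by (simp add: int_pow_pow)
    also have "\<dots> = (P \<otimes> P) [^] (4*e)" using carr by (simp add: P2[symmetric] pow2 P_def)
    also have "\<dots> = b [^] ((k - 1 - 16*e) * (2 + 16*e) * (4*e))" using PP b by (simp add: int_pow_pow)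
    also have "\<dots> = z" unfolding z_def
      by (rule pow_cong'[OF b Bn, where k="2*\<epsilon>*e + 16*\<epsilon>*e^2 - 32*e^2"]) (simp add: k_def algebra_simps power2_eq_square)
    finally have "inv c \<otimes> z \<otimes> c = z" .
    then have "c \<otimes> (inv c \<otimes> z \<otimes> c) = c \<otimes> z" by simp
    then show ?thesis using c z by (simp add: m_assoc)
  qed
  define X where "X = -2 - 8*\<epsilon>*e - 16*e"
  define L where "L = 8*e - 1"
  define x where "x = inv a \<otimes> inv a"
  have x: "x \<in> carrier G" using carr by (simp add: x_def)
  have uk: "u [^] k = b [^] X \<otimes> u"
  proof -
    have "u [^] k = u [^] (2 * (1 + 4*\<epsilon>*e) + 1)" by (simp add: k_def algebra_simps)
    also have "\<dots> = (u \<otimes> u) [^] (1 + 4*\<epsilon>*e) \<otimes> u" using u by (rule odd_pow)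
    also have "\<dots> = b [^] (-(2 + 16*e) * (1 + 4*\<epsilon>*e)) \<otimes> u" using C(3) b by (simp add: u_def int_pow_pow)
    also have "\<dots> = b [^] X \<otimes> u"
      using pow_cong'[OF b Bn, of "-(2 + 16*e) * (1 + 4*\<epsilon>*e)" X "-2*\<epsilon>*e"]
      by (simp add: X_def algebra_simps)
    finally show ?thesis .
  qed
  have M1: "b \<otimes> (c \<otimes> (inv b \<otimes> x)) = b [^] X \<otimes> (inv a \<otimes> (inv a \<otimes> c [^] L))"
  proof -
    have "inv a \<otimes> ((inv c \<otimes> b) \<otimes> a) = (inv a \<otimes> (c [^] (-1::int) \<otimes> a)) \<otimes> (inv a \<otimes> (b \<otimes> a))"
      using carr by (simp add: m_assoc inv_as_pow[symmetric])
    also have "\<dots> = b \<otimes> (c \<otimes> (inv b \<otimes> u))" using C(4)[of "-1"] C(2)[of 1] carr by (simp add: u_def m_assoc)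
    finally have l: "inv a \<otimes> ((inv c \<otimes> b) \<otimes> a) = b \<otimes> (c \<otimes> (inv b \<otimes> u))" .
    have "inv a \<otimes> ((b [^] k \<otimes> c [^] (1 - 8*e)) \<otimes> a) = (inv a \<otimes> (b [^] k \<otimes> a)) \<otimes> (inv a \<otimes> (c [^] (1 - 8*e) \<otimes> a))"
      using carr by (simp add: m_assoc)
    also have "\<dots> = (b [^] X \<otimes> u) \<otimes> (b \<otimes> (c [^] L \<otimes> inv b))"
      using C(2)[of k] C(4)[of "1 - 8*e"] uk by (simp add: u_def L_def)
    finally have r: "inv a \<otimes> ((b [^] k \<otimes> c [^] (1 - 8*e)) \<otimes> a) = (b [^] X \<otimes> u) \<otimes> (b \<otimes> (c [^] L \<otimes> inv b))" .
    have "(b \<otimes> (c \<otimes> (inv b \<otimes> x))) \<otimes> inv b = (b [^] X \<otimes> (inv a \<otimes> (inv a \<otimes> c [^] L))) \<otimes> inv b"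
      using l r R3 carr by (simp add: k_def u_def x_def m_assoc)
    then show ?thesis using carr x by simp
  qed
  have xc: "x \<otimes> c = z \<otimes> c \<otimes> x"
  proof -
    have "(c \<otimes> x) \<otimes> inv c = (z \<otimes> x \<otimes> c) \<otimes> inv c" using C(5) carr x z by (simp add: x_def z_def m_assoc)
    then have "c \<otimes> x = z \<otimes> x \<otimes> c" using carr x z by simp
    then have "z \<otimes> (c \<otimes> x) = (z \<otimes> z) \<otimes> (x \<otimes> c)" using carr x z by (simp add: m_assoc)
    then show ?thesis using zz carr x z by (simp add: m_assoc)
  qed
  have L0: "L = int (nat L)" using e1 by (simp add: L_def)
  have M2: "x \<otimes> c [^] L = z \<otimes> c [^] L \<otimes> x"
  proof -
    have "x \<otimes> c [^] (nat L) = z [^] (nat L) \<otimes> c [^] (nat L) \<otimes> x"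
      using comm_pow_nat[OF x c z xc B7[symmetric]] .
    moreover have "c [^] (nat L) = c [^] L" using L0 by (metis int_pow_int)
    moreover have "z [^] (nat L) = z"
    proof -
      have "z [^] (nat L) = z [^] L" using L0 by (metis int_pow_int)
      also have "\<dots> = z [^] (2 * (4*e - 1) + 1)" by (simp add: L_def)
      also have "\<dots> = (z \<otimes> z) [^] (4*e - 1) \<otimes> z" by (rule odd_pow[OF z])
      also have "\<dots> = z" using z zz by simp
      finally show ?thesis .
    qed
    ultimately show ?thesis by simp
  qed
  have "(b \<otimes> (c \<otimes> inv b)) \<otimes> x = (b [^] X \<otimes> (z \<otimes> c [^] L)) \<otimes> x"
    using M1 M2 carr x z by (simp add: x_def m_assoc)
  then have "b \<otimes> (c \<otimes> inv b) = b [^] X \<otimes> (z \<otimes> c [^] L)" using carr x z by simp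
  then have "c \<otimes> inv b = inv b \<otimes> (b [^] X \<otimes> (z \<otimes> c [^] L))" using carr z
    by (metis inv_solve_left m_closed int_pow_closed inv_closed)
  also have "\<dots> = b [^] (-1 + X + 16*e) \<otimes> c [^] L" using carr by (simp add: inv_as_pow z_def pow_merge m_assoc[symmetric] algebra_simps)
  finally have "b [^] (-1 + X + 16*e) \<otimes> c [^] L = b [^] (-3 + \<epsilon> * (8*e)) \<otimes> c [^] L"
    using R4 by (simp add: L_def algebra_simps)
  then have eq: "b [^] (-3 - 8*\<epsilon>*e) = b [^] (-3 + 8*\<epsilon>*e)" using carr by (simp add: X_def algebra_simps)
  have "b [^] (16*\<epsilon>*e) = b [^] (-3 + 8*\<epsilon>*e) \<otimes> b [^] (-(-3 - 8*\<epsilon>*e))" using b by (simp add: pow_merge algebra_simps)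
  also have "\<dots> = b [^] (-3 - 8*\<epsilon>*e) \<otimes> b [^] (-(-3 - 8*\<epsilon>*e))" by (simp only: eq)
  also have "\<dots> = \<one>" using b by (simp only: pow_merge) simp
  finally have h: "b [^] (16*\<epsilon>*e) = \<one>" .
  show ?thesis using eps
  proof
    assume "\<epsilon> = 1" then show ?thesis using h by simp
  next
    assume "\<epsilon> = -1"
    then have "b [^] (-(16*e)) = \<one>" using h by simp
    then show ?thesis using b by (simp add: int_pow_neg)
  qed
qed

end


locale P4 =
  fixes P :: "'a set" and leq :: "'a \<Rightarrow> 'a \<Rightarrow> bool"
  assumes ap: "abstract_polytope4 P leq"
begin

abbreviation "flag \<equiv> is_flag P leq"

lemma prefl: "x \<in> P \<Longrightarrow> leq x x" using ap unfolding abstract_polytope4_def by blast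
lemma pantisym: "x \<in> P \<Longrightarrow> y \<in> P \<Longrightarrow> leq x y \<Longrightarrow> leq y x \<Longrightarrow> x = y"
  using ap unfolding abstract_polytope4_def by blast
lemma ptrans: "x \<in> P \<Longrightarrow> y \<in> P \<Longrightarrow> z \<in> P \<Longrightarrow> leq x y \<Longrightarrow> leq y z \<Longrightarrow> leq x z"
  using ap unfolding abstract_polytope4_def by blast
lemma has_min: "\<exists>m\<in>P. \<forall>x\<in>P. leq m x" using ap unfolding abstract_polytope4_def by blast
lemma has_max: "\<exists>M\<in>P. \<forall>x\<in>P. leq x M" using ap unfolding abstract_polytope4_def by blast
lemma flag_card: "flag \<Phi> \<Longrightarrow> finite \<Phi> \<and> card \<Phi> = 6" using ap unfolding abstract_polytope4_def by blast
lemma diamond: "face_rank P leq F (j - 1) \<Longrightarrow> face_rank P leq G (j + 1) \<Longrightarrow> leq F G \<Longrightarrow>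
        card {H\<in>P. H \<noteq> F \<and> H \<noteq> G \<and> leq F H \<and> leq H G} = 2"
  using ap unfolding abstract_polytope4_def by blast
lemma conn: "flag \<Phi> \<Longrightarrow> flag \<Psi> \<Longrightarrow>
        (\<lambda>A B. flag A \<and> flag B \<and> adjacent_flags A B \<and> \<Phi> \<inter> \<Psi> \<subseteq> A \<and> \<Phi> \<inter> \<Psi> \<subseteq> B)\<^sup>*\<^sup>* \<Phi> \<Psi>"
  using ap unfolding abstract_polytope4_def by blast

lemma flag_chain: "flag \<Phi> \<Longrightarrow> po_chain P leq \<Phi>" by (simp add: is_flag_def)
lemma flag_sub: "flag \<Phi> \<Longrightarrow> \<Phi> \<subseteq> P" by (simp add: is_flag_def po_chain_def)
lemma flag_comp: "flag \<Phi> \<Longrightarrow> x \<in> \<Phi> \<Longrightarrow> y \<in> \<Phi> \<Longrightarrow> leq x y \<or> leq y x"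
  by (simp add: is_flag_def po_chain_def)
lemma flag_max: "flag \<Phi> \<Longrightarrow> x \<in> P \<Longrightarrow> po_chain P leq (insert x \<Phi>) \<Longrightarrow> x \<in> \<Phi>"
  by (simp add: is_flag_def)

lemma extend_flag: assumes C: "po_chain P leq C" shows "\<exists>\<Phi>. flag \<Phi> \<and> C \<subseteq> \<Phi>"
proof -
  let ?A = "{D. po_chain P leq D \<and> C \<subseteq> D}"
  have "\<forall>Z\<in>chains ?A. \<exists>U\<in>?A. \<forall>X\<in>Z. X \<subseteq> U"
  proof
    fix Z assume Z: "Z \<in> chains ?A"
    show "\<exists>U\<in>?A. \<forall>X\<in>Z. X \<subseteq> U"
    proof (cases "Z = {}")
      case True then show ?thesis using C by blast
    next
      case False
      have "\<Union>Z \<in> ?A"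
      proof -
        have sub: "\<Union>Z \<subseteq> P" using chainsD2[OF Z] by (auto simp: po_chain_def)
        have "\<forall>x\<in>\<Union>Z. \<forall>y\<in>\<Union>Z. leq x y \<or> leq y x"
        proof (intro ballI)
          fix x y assume "x \<in> \<Union>Z" "y \<in> \<Union>Z"
          then obtain X Y where XY: "X \<in> Z" "Y \<in> Z" "x \<in> X" "y \<in> Y" by blast
          then have "X \<subseteq> Y \<or> Y \<subseteq> X" using chainsD[OF Z] by blast
          moreover have "po_chain P leq X" "po_chain P leq Y" using XY chainsD2[OF Z] by auto
          ultimately show "leq x y \<or> leq y x" using XY unfolding po_chain_def by blast
        qed
        moreover have "C \<subseteq> \<Union>Z" using False chainsD2[OF Z] by auto
        ultimately show ?thesis using sub by (simp add: po_chain_def)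
      qed
      then show ?thesis by blast
    qed
  qed
  from Zorn_Lemma2[OF this] obtain M where M: "M \<in> ?A" and Mmax: "\<forall>X\<in>?A. M \<subseteq> X \<longrightarrow> X = M" by blast
  have "flag M"
    unfolding is_flag_def
  proof (intro conjI ballI impI)
    show "po_chain P leq M" using M by simp
    fix x assume x: "x \<in> P" and ch: "po_chain P leq (insert x M)"
    then have "insert x M \<in> ?A" using M by auto
    then have "insert x M = M" using Mmax by blast
    then show "x \<in> M" by blast
  qed
  then show ?thesis using M by blast
qed

lemma chain_bound: assumes "po_chain P leq C" shows "finite C \<and> card C \<le> 6"
proof -
  obtain \<Phi> where "flag \<Phi>" "C \<subseteq> \<Phi>" using extend_flag[OF assms] by blast
  then show ?thesis using flag_card by (metis card_mono finite_subset)
qed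

lemma six_flag: assumes C: "po_chain P leq C" and c6: "card C = 6" shows "flag C"
  unfolding is_flag_def
proof (intro conjI ballI impI)
  show "po_chain P leq C" by fact
  fix x assume x: "x \<in> P" and ch: "po_chain P leq (insert x C)"
  show "x \<in> C"
  proof (rule ccontr)
    assume "x \<notin> C"
    then have "card (insert x C) = 7" using chain_bound[OF C] c6 by simp
    then show False using chain_bound[OF ch] by simp
  qed
qed

lemma singleton_chain: "x \<in> P \<Longrightarrow> po_chain P leq {x}"
  by (simp add: po_chain_def prefl)

lemma in_some_flag: "x \<in> P \<Longrightarrow> \<exists>\<Phi>. flag \<Phi> \<and> x \<in> \<Phi>"
  using extend_flag[OF singleton_chain] by blast

definition bel :: "'a set \<Rightarrow> 'a \<Rightarrow> 'a set" where
  "bel \<Phi> x = {G\<in>\<Phi>. G \<noteq> x \<and> leq G x}"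

lemma rank_inv_le: assumes F: "flag \<Phi>" and G: "flag \<Psi>" and x: "x \<in> \<Phi>" "x \<in> \<Psi>"
  shows "card (bel \<Phi> x) \<le> card (bel \<Psi> x)"
proof -
  let ?C = "insert x (bel \<Phi> x) \<union> {G\<in>\<Psi>. G \<noteq> x \<and> leq x G}"
  have sP: "\<Phi> \<subseteq> P" "\<Psi> \<subseteq> P" using F G flag_sub by auto
  have ch: "po_chain P leq ?C"
    unfolding po_chain_def
  proof (intro conjI ballI)
    show "?C \<subseteq> P" using sP x by (auto simp: bel_def)
  next
    fix u v assume u: "u \<in> ?C" and v: "v \<in> ?C"
    have xx: "leq x x" using prefl sP x by auto
    show "leq u v \<or> leq v u"
    proof -
      { assume "u \<in> insert x (bel \<Phi> x)" "v \<in> insert x (bel \<Phi> x)"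
        then have ?thesis using flag_comp[OF F] x by (auto simp: bel_def) }
      moreover
      { assume "u \<in> {G\<in>\<Psi>. G \<noteq> x \<and> leq x G}" "v \<in> {G\<in>\<Psi>. G \<noteq> x \<and> leq x G}"
        then have ?thesis using flag_comp[OF G] by auto }
      moreover
      { fix p q assume p: "p \<in> insert x (bel \<Phi> x)" and q: "q \<in> {G\<in>\<Psi>. G \<noteq> x \<and> leq x G}"
        have "leq p x" using p xx by (auto simp: bel_def)
        then have "leq p q" using ptrans[of p x q] p q sP x by (auto simp: bel_def) }
      ultimately show ?thesis using u v by blast
    qed
  qed
  have finC: "finite ?C" "card ?C \<le> 6" using chain_bound[OF ch] by auto
  have finF: "finite \<Phi>" "finite \<Psi>" using F G flag_card by auto
  have disj: "insert x (bel \<Phi> x) \<inter> {G\<in>\<Psi>. G \<noteq> x \<and> leq x G} = {}"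
  proof -
    { fix g assume "g \<in> bel \<Phi> x" "g \<in> \<Psi>" "g \<noteq> x" "leq x g"
      then have "g = x" using pantisym sP x by (auto simp: bel_def) 
      then have False using \<open>g \<noteq> x\<close> by simp }
    then show ?thesis by blast
  qed
  have xb: "x \<notin> bel \<Phi> x" by (simp add: bel_def)
  have finb: "finite (bel \<Phi> x)" using finF by (simp add: bel_def)
  have "card ?C = card (bel \<Phi> x) + 1 + card {G\<in>\<Psi>. G \<noteq> x \<and> leq x G}"
    using card_Un_disjoint[of "insert x (bel \<Phi> x)" "{G\<in>\<Psi>. G \<noteq> x \<and> leq x G}"] disj finb finF xb
    by simp
  moreover have "card \<Psi> = card (bel \<Psi> x) + 1 + card {G\<in>\<Psi>. G \<noteq> x \<and> leq x G}"
  proof -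
    have "\<Psi> = insert x (bel \<Psi> x) \<union> {G\<in>\<Psi>. G \<noteq> x \<and> leq x G}"
      using x flag_comp[OF G] by (auto simp: bel_def)
    moreover have "insert x (bel \<Psi> x) \<inter> {G\<in>\<Psi>. G \<noteq> x \<and> leq x G} = {}"
      using pantisym sP x by (auto simp: bel_def)
    moreover have "finite (bel \<Psi> x)" using finF by (simp add: bel_def)
    ultimately show ?thesis
      using card_Un_disjoint[of "insert x (bel \<Psi> x)" "{G\<in>\<Psi>. G \<noteq> x \<and> leq x G}"] finF
      by (simp add: bel_def)
  qed
  ultimately show ?thesis using finC flag_card[OF G] by simp
qed

lemma rank_inv: "flag \<Phi> \<Longrightarrow> flag \<Psi> \<Longrightarrow> x \<in> \<Phi> \<Longrightarrow> x \<in> \<Psi> \<Longrightarrow> card (bel \<Phi> x) = card (bel \<Psi> x)"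
  using rank_inv_le by (meson le_antisym)

end

context P4 begin

definition rk :: "'a \<Rightarrow> int" where
  "rk x = int (card (bel (SOME \<Phi>. flag \<Phi> \<and> x \<in> \<Phi>) x)) - 1"

lemma rk_flag: assumes F: "flag \<Phi>" and x: "x \<in> \<Phi>" shows "rk x = int (card (bel \<Phi> x)) - 1"
proof -
  have "\<exists>\<Phi>. flag \<Phi> \<and> x \<in> \<Phi>" using F x by blast
  then have "flag (SOME \<Phi>. flag \<Phi> \<and> x \<in> \<Phi>) \<and> x \<in> (SOME \<Phi>. flag \<Phi> \<and> x \<in> \<Phi>)" by (rule someI_ex)
  then show ?thesis unfolding rk_def using rank_inv F x by metis
qed

lemma face_rank_iff: "face_rank P leq x j \<longleftrightarrow> x \<in> P \<and> rk x = j"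
proof
  assume "face_rank P leq x j"
  then obtain \<Phi> where "x \<in> P" "flag \<Phi>" "x \<in> \<Phi>" "int (card {G\<in>\<Phi>. G \<noteq> x \<and> leq G x}) - 1 = j"
    unfolding face_rank_def by blast
  then show "x \<in> P \<and> rk x = j" using rk_flag by (simp add: bel_def)
next
  assume "x \<in> P \<and> rk x = j"
  then obtain \<Phi> where "flag \<Phi>" "x \<in> \<Phi>" "x \<in> P" "rk x = j" using in_some_flag by blast
  then show "face_rank P leq x j" unfolding face_rank_def using rk_flag by (auto simp: bel_def)
qed

lemma rk_mono_flag: assumes F: "flag \<Phi>" and xy: "x \<in> \<Phi>" "y \<in> \<Phi>" "leq x y" "x \<noteq> y"
  shows "rk x < rk y"
proof -
  have sP: "\<Phi> \<subseteq> P" using F flag_sub by auto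
  have fin: "finite \<Phi>" using F flag_card by auto
  have "bel \<Phi> x \<subseteq> bel \<Phi> y" using xy sP by (auto simp: bel_def intro: ptrans dest: pantisym)
  moreover have "x \<in> bel \<Phi> y" "x \<notin> bel \<Phi> x" using xy by (auto simp: bel_def)
  ultimately have "bel \<Phi> x \<subset> bel \<Phi> y" by blast
  then have "card (bel \<Phi> x) < card (bel \<Phi> y)" using fin by (intro psubset_card_mono) (auto simp: bel_def)
  then show ?thesis using rk_flag[OF F] xy by simp
qed

lemma rk_mono: assumes xy: "x \<in> P" "y \<in> P" "leq x y" "x \<noteq> y" shows "rk x < rk y"
proof -
  have "po_chain P leq {x, y}" using xy prefl by (auto simp: po_chain_def)
  then obtain \<Phi> where "flag \<Phi>" "{x, y} \<subseteq> \<Phi>" using extend_flag by blast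
  then show ?thesis using rk_mono_flag xy by auto
qed

lemma rk_inj: assumes F: "flag \<Phi>" and xy: "x \<in> \<Phi>" "y \<in> \<Phi>" "rk x = rk y" shows "x = y"
  using flag_comp[OF F xy(1,2)] rk_mono_flag[OF F] xy by (metis less_irrefl)

lemma rk_le: assumes F: "flag \<Phi>" and xy: "x \<in> \<Phi>" "y \<in> \<Phi>" "rk x \<le> rk y" shows "leq x y"
proof -
  have sP: "\<Phi> \<subseteq> P" using F flag_sub by auto
  show ?thesis
  proof (cases "x = y")
    case True then show ?thesis using prefl sP xy by auto
  next
    case False
    show ?thesis
    proof (rule ccontr)
      assume "\<not> leq x y"
      then have "leq y x" using flag_comp[OF F xy(1,2)] by blast
      then have "rk y < rk x" using rk_mono_flag[OF F xy(2,1)] False by auto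
      then show False using xy by simp
    qed
  qed
qed

lemma rk_range: assumes F: "flag \<Phi>" and x: "x \<in> \<Phi>" shows "-1 \<le> rk x \<and> rk x \<le> 4"
proof -
  have fin: "finite \<Phi>" "card \<Phi> = 6" using F flag_card by auto
  have "bel \<Phi> x \<subseteq> \<Phi> - {x}" by (auto simp: bel_def)
  then have "card (bel \<Phi> x) \<le> card (\<Phi> - {x})" using fin by (intro card_mono) auto
  also have "\<dots> = 5" using fin x by simp
  finally show ?thesis using rk_flag[OF F x] by simp
qed

lemma rk_image: assumes F: "flag \<Phi>" shows "rk ` \<Phi> = {-1..4}"
proof -
  have fin: "finite \<Phi>" "card \<Phi> = 6" using F flag_card by auto
  have sub: "rk ` \<Phi> \<subseteq> {-1..4}" using rk_range[OF F] by auto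
  have "inj_on rk \<Phi>" using rk_inj[OF F] by (auto simp: inj_on_def)
  then have "card (rk ` \<Phi>) = 6" using fin by (simp add: card_image)
  moreover have "card {-1..(4::int)} = 6" by simp
  ultimately show ?thesis using sub by (metis card_subset_eq finite_atLeastAtMost_int)
qed

definition fc :: "'a set \<Rightarrow> int \<Rightarrow> 'a" where
  "fc \<Phi> j = (THE x. x \<in> \<Phi> \<and> rk x = j)"

lemma fc_prop: assumes F: "flag \<Phi>" and j: "-1 \<le> j" "j \<le> 4"
  shows "fc \<Phi> j \<in> \<Phi>" "rk (fc \<Phi> j) = j"
proof -
  have "j \<in> rk ` \<Phi>" using rk_image[OF F] j by auto
  then obtain x where x: "x \<in> \<Phi>" "rk x = j" by blast
  have "\<exists>!x. x \<in> \<Phi> \<and> rk x = j" using x rk_inj[OF F] by blast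
  then have "fc \<Phi> j \<in> \<Phi> \<and> rk (fc \<Phi> j) = j" unfolding fc_def by (rule theI')
  then show "fc \<Phi> j \<in> \<Phi>" "rk (fc \<Phi> j) = j" by auto
qed

lemma fc_eq: assumes F: "flag \<Phi>" and x: "x \<in> \<Phi>" shows "fc \<Phi> (rk x) = x"
  using fc_prop[OF F] rk_range[OF F x] rk_inj[OF F] x by blast

lemma fc_eqI: assumes F: "flag \<Phi>" and x: "x \<in> \<Phi>" "rk x = j" shows "fc \<Phi> j = x"
  using fc_eq[OF F x(1)] x(2) by simp

lemma flag_fc: assumes F: "flag \<Phi>" shows "\<Phi> = fc \<Phi> ` {-1..4}"
proof
  show "\<Phi> \<subseteq> fc \<Phi> ` {-1..4}" using fc_eq[OF F] rk_range[OF F] by (metis atLeastAtMost_iff image_eqI subsetI)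
  show "fc \<Phi> ` {-1..4} \<subseteq> \<Phi>" using fc_prop[OF F] by auto
qed

lemma min_in_flag: assumes F: "flag \<Phi>" and m: "m \<in> P" "\<forall>x\<in>P. leq m x" shows "m \<in> \<Phi>"
proof -
  have "po_chain P leq (insert m \<Phi>)" using flag_chain[OF F] m flag_sub[OF F] by (auto simp: po_chain_def)
  then show ?thesis using flag_max[OF F m(1)] by blast
qed

lemma max_in_flag: assumes F: "flag \<Phi>" and M: "M \<in> P" "\<forall>x\<in>P. leq x M" shows "M \<in> \<Phi>"
proof -
  have "po_chain P leq (insert M \<Phi>)" using flag_chain[OF F] M flag_sub[OF F] by (auto simp: po_chain_def)
  then show ?thesis using flag_max[OF F M(1)] by blast
qed

lemma rk_min: assumes m: "m \<in> P" "\<forall>x\<in>P. leq m x" shows "rk m = -1"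
proof -
  obtain \<Phi> where F: "flag \<Phi>" "m \<in> \<Phi>" using in_some_flag m by blast
  have "bel \<Phi> m = {}" using m flag_sub[OF F(1)] pantisym by (auto simp: bel_def)
  then show ?thesis using rk_flag[OF F] by simp
qed

lemma rk_max: assumes M: "M \<in> P" "\<forall>x\<in>P. leq x M" shows "rk M = 4"
proof -
  obtain \<Phi> where F: "flag \<Phi>" "M \<in> \<Phi>" using in_some_flag M by blast
  have "bel \<Phi> M = \<Phi> - {M}" using M flag_sub[OF F(1)] by (auto simp: bel_def)
  then show ?thesis using rk_flag[OF F] flag_card[OF F(1)] F by simp
qed

end

context P4 begin

definition betw :: "'a \<Rightarrow> 'a \<Rightarrow> 'a set" where
  "betw lo hi = {H\<in>P. H \<noteq> lo \<and> H \<noteq> hi \<and> leq lo H \<and> leq H hi}"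

definition oth :: "'a set \<Rightarrow> int \<Rightarrow> 'a" where
  "oth \<Phi> j = (THE h. h \<in> betw (fc \<Phi> (j - 1)) (fc \<Phi> (j + 1)) \<and> h \<noteq> fc \<Phi> j)"

definition adj :: "int \<Rightarrow> 'a set \<Rightarrow> 'a set" where
  "adj j \<Phi> = insert (oth \<Phi> j) (\<Phi> - {fc \<Phi> j})"

lemma fcP: "flag \<Phi> \<Longrightarrow> -1 \<le> j \<Longrightarrow> j \<le> 4 \<Longrightarrow> fc \<Phi> j \<in> P"
  using fc_prop flag_sub by blast

lemma fc_le: "flag \<Phi> \<Longrightarrow> -1 \<le> i \<Longrightarrow> i \<le> j \<Longrightarrow> j \<le> 4 \<Longrightarrow> leq (fc \<Phi> i) (fc \<Phi> j)"
proof -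
  assume F: "flag \<Phi>" and ij: "-1 \<le> i" "i \<le> j" "j \<le> 4"
  have "j \<ge> -1" "i \<le> 4" using ij by auto
  then have "fc \<Phi> i \<in> \<Phi>" "fc \<Phi> j \<in> \<Phi>" "rk (fc \<Phi> i) = i" "rk (fc \<Phi> j) = j"
    using fc_prop[OF F ij(1)] fc_prop[OF F _ ij(3)] by auto
  then show ?thesis using rk_le[OF F] ij by simp
qed

lemma fc_inj: "flag \<Phi> \<Longrightarrow> -1 \<le> i \<Longrightarrow> i \<le> 4 \<Longrightarrow> -1 \<le> j \<Longrightarrow> j \<le> 4 \<Longrightarrow> fc \<Phi> i = fc \<Phi> j \<Longrightarrow> i = j"
proof -
  assume F: "flag \<Phi>" and ij: "-1 \<le> i" "i \<le> 4" "-1 \<le> j" "j \<le> 4" and e: "fc \<Phi> i = fc \<Phi> j"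
  have a: "rk (fc \<Phi> i) = i" using fc_prop(2)[OF F ij(1,2)] .
  have b: "rk (fc \<Phi> j) = j" using fc_prop(2)[OF F ij(3,4)] .
  show "i = j" using a b e by metis
qed

lemma fc_ne: "flag \<Phi> \<Longrightarrow> -1 \<le> i \<Longrightarrow> i \<le> 4 \<Longrightarrow> -1 \<le> j \<Longrightarrow> j \<le> 4 \<Longrightarrow> i \<noteq> j \<Longrightarrow> fc \<Phi> i \<noteq> fc \<Phi> j"
  using fc_inj by blast

lemma betw_card: assumes F: "flag \<Phi>" and j: "0 \<le> j" "j \<le> 3"
  shows "betw (fc \<Phi> (j - 1)) (fc \<Phi> (j + 1)) = {fc \<Phi> j, oth \<Phi> j}" "oth \<Phi> j \<noteq> fc \<Phi> j"
proof -
  let ?lo = "fc \<Phi> (j - 1)" and ?hi = "fc \<Phi> (j + 1)" and ?mid = "fc \<Phi> j"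
  have "face_rank P leq ?lo (j - 1)" "face_rank P leq ?hi (j + 1)"
    using fc_prop[OF F] fcP[OF F] j by (simp_all add: face_rank_iff)
  moreover have "leq ?lo ?hi" using fc_le[OF F] j by simp
  ultimately have c2: "card (betw ?lo ?hi) = 2" using diamond unfolding betw_def by blast
  have mid: "?mid \<in> betw ?lo ?hi"
  proof -
    have "fc \<Phi> j \<noteq> fc \<Phi> (j - 1)" "fc \<Phi> j \<noteq> fc \<Phi> (j + 1)" using fc_ne[OF F] j by auto
    moreover have "leq ?lo ?mid" "leq ?mid ?hi" using fc_le[OF F] j by auto
    ultimately show ?thesis unfolding betw_def using fcP[OF F] j by auto
  qed
  obtain p q where pq: "betw ?lo ?hi = {p, q}" "p \<noteq> q" using c2 by (meson card_2_iff)
  then obtain h where h: "betw ?lo ?hi = {?mid, h}" "h \<noteq> ?mid" using mid by auto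
  have ex: "\<exists>!h. h \<in> betw ?lo ?hi \<and> h \<noteq> ?mid" using h by auto
  have "oth \<Phi> j \<in> betw ?lo ?hi \<and> oth \<Phi> j \<noteq> ?mid" unfolding oth_def by (rule theI'[OF ex])
  then have "oth \<Phi> j = h" using h by auto
  then show "betw ?lo ?hi = {?mid, oth \<Phi> j}" "oth \<Phi> j \<noteq> ?mid" using h by auto
qed

lemma oth_prop: assumes F: "flag \<Phi>" and j: "0 \<le> j" "j \<le> 3"
  shows "oth \<Phi> j \<in> P" "rk (oth \<Phi> j) = j" "oth \<Phi> j \<notin> \<Phi>" "oth \<Phi> j \<noteq> fc \<Phi> j"
    "leq (fc \<Phi> (j - 1)) (oth \<Phi> j)" "leq (oth \<Phi> j) (fc \<Phi> (j + 1))"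
proof -
  have b: "oth \<Phi> j \<in> betw (fc \<Phi> (j - 1)) (fc \<Phi> (j + 1))" using betw_card[OF F j] by auto
  then show P: "oth \<Phi> j \<in> P" and l: "leq (fc \<Phi> (j - 1)) (oth \<Phi> j)" and h: "leq (oth \<Phi> j) (fc \<Phi> (j + 1))"
    by (auto simp: betw_def)
  have "rk (fc \<Phi> (j - 1)) < rk (oth \<Phi> j)" "rk (oth \<Phi> j) < rk (fc \<Phi> (j + 1))"
    using b rk_mono fcP[OF F] j by (auto simp: betw_def)
  then show r: "rk (oth \<Phi> j) = j" using fc_prop[OF F] j by simp
  show ne: "oth \<Phi> j \<noteq> fc \<Phi> j" using betw_card[OF F j] by simp
  show "oth \<Phi> j \<notin> \<Phi>" using fc_eqI[OF F _ r] ne by metis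
qed

lemma adj_flag: assumes F: "flag \<Phi>" and j: "0 \<le> j" "j \<le> 3" shows "flag (adj j \<Phi>)"
proof -
  note O = oth_prop[OF F j]
  have sP: "\<Phi> \<subseteq> P" using flag_sub[OF F] .
  have ch: "po_chain P leq (adj j \<Phi>)"
    unfolding po_chain_def adj_def
  proof (intro conjI ballI)
    show "insert (oth \<Phi> j) (\<Phi> - {fc \<Phi> j}) \<subseteq> P" using O sP by auto
  next
    fix x y assume x: "x \<in> insert (oth \<Phi> j) (\<Phi> - {fc \<Phi> j})" and y: "y \<in> insert (oth \<Phi> j) (\<Phi> - {fc \<Phi> j})"
    have key: "\<And>g. g \<in> \<Phi> - {fc \<Phi> j} \<Longrightarrow> leq g (oth \<Phi> j) \<or> leq (oth \<Phi> j) g"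
    proof -
      fix g assume g: "g \<in> \<Phi> - {fc \<Phi> j}"
      have rg: "rk g \<noteq> j" using g fc_eqI[OF F] by auto
      have gr: "-1 \<le> rk g" "rk g \<le> 4" using rk_range[OF F] g by auto
      show "leq g (oth \<Phi> j) \<or> leq (oth \<Phi> j) g"
      proof (cases "rk g < j")
        case True
        then have "leq g (fc \<Phi> (j - 1))" using rk_le[OF F] g fc_prop[OF F] j by auto
        then show ?thesis using ptrans[of g "fc \<Phi> (j - 1)" "oth \<Phi> j"] O sP g fcP[OF F] j by auto
      next
        case False
        then have "leq (fc \<Phi> (j + 1)) g" using rg rk_le[OF F] g fc_prop[OF F] j by auto
        then show ?thesis using ptrans[of "oth \<Phi> j" "fc \<Phi> (j + 1)" g] O sP g fcP[OF F] j by auto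
      qed
    qed
    show "leq x y \<or> leq y x"
      using x y key flag_comp[OF F] prefl O by auto
  qed
  have "card (adj j \<Phi>) = 6"
    using flag_card[OF F] fc_prop[OF F] O j by (simp add: adj_def)
  then show ?thesis using six_flag ch by blast
qed

lemma adj_ne: assumes F: "flag \<Phi>" and j: "0 \<le> j" "j \<le> 3" shows "adj j \<Phi> \<noteq> \<Phi>"
proof -
  have "oth \<Phi> j \<notin> \<Phi>" by (rule oth_prop(3)[OF F j])
  then show ?thesis unfolding adj_def by blast
qed

lemma flag_adj_adj: assumes F: "flag \<Phi>" and j: "0 \<le> j" "j \<le> 3" shows "flag_adj P leq \<Phi> j (adj j \<Phi>)"
  unfolding flag_adj_def
proof (intro conjI ballI impI)
  show "flag (adj j \<Phi>)" by (rule adj_flag[OF F j])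
  show "adj j \<Phi> \<noteq> \<Phi>" by (rule adj_ne[OF F j])
  fix x assume "x \<in> \<Phi>" "\<not> face_rank P leq x j"
  then show "x \<in> adj j \<Phi>" using fc_prop[OF F] fcP[OF F] j by (auto simp: adj_def face_rank_iff)
qed

lemma adj_unique: assumes F: "flag \<Phi>" and j: "0 \<le> j" "j \<le> 3" and A: "flag_adj P leq \<Phi> j \<Psi>"
  shows "\<Psi> = adj j \<Phi>"
proof -
  have G: "flag \<Psi>" and ne: "\<Psi> \<noteq> \<Phi>" and sub0: "\<forall>F\<in>\<Phi>. \<not> face_rank P leq F j \<longrightarrow> F \<in> \<Psi>"
    using A unfolding flag_adj_def by auto
  have sP: "\<Phi> \<subseteq> P" using flag_sub[OF F] .
  have sub: "\<Phi> - {fc \<Phi> j} \<subseteq> \<Psi>"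
  proof
    fix x assume x: "x \<in> \<Phi> - {fc \<Phi> j}"
    then have "\<not> face_rank P leq x j" using fc_eqI[OF F] by (auto simp: face_rank_iff)
    then show "x \<in> \<Psi>" using sub0 x by auto
  qed
  have fin: "finite \<Phi>" "card \<Phi> = 6" "finite \<Psi>" "card \<Psi> = 6" using flag_card F G by auto
  have c5: "card (\<Phi> - {fc \<Phi> j}) = 5" using fin fc_prop[OF F] j by simp
  have "card (\<Psi> - (\<Phi> - {fc \<Phi> j})) = 1"
    using card_Diff_subset[OF _ sub] fin c5 by (simp add: finite_subset)
  then obtain y where y: "\<Psi> - (\<Phi> - {fc \<Phi> j}) = {y}" by (meson card_1_singletonE)
  have Psi: "\<Psi> = insert y (\<Phi> - {fc \<Phi> j})" using y sub by blast
  have yne: "y \<noteq> fc \<Phi> j"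
  proof
    assume "y = fc \<Phi> j"
    then have "\<Psi> = \<Phi>" using Psi fc_prop[OF F] j by auto
    then show False using ne by simp
  qed
  have yP: "y \<in> \<Psi>" using Psi by simp
  have ry: "rk y = j"
  proof (rule ccontr)
    assume nr: "rk y \<noteq> j"
    have "-1 \<le> rk y" "rk y \<le> 4" using rk_range[OF G yP] by auto
    then have "fc \<Phi> (rk y) \<in> \<Psi>" "rk (fc \<Phi> (rk y)) = rk y" "fc \<Phi> (rk y) \<in> \<Phi> - {fc \<Phi> j}"
      using fc_prop[OF F] sub nr fc_inj[OF F] j by auto
    then have "y = fc \<Phi> (rk y)" using rk_inj[OF G yP] by auto
    then show False using y \<open>fc \<Phi> (rk y) \<in> \<Phi> - {fc \<Phi> j}\<close> by auto
  qed
  have lo: "fc \<Phi> (j - 1) \<in> \<Psi>" "fc \<Phi> (j + 1) \<in> \<Psi>"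
  proof -
    have "fc \<Phi> (j - 1) \<in> \<Phi>" "fc \<Phi> (j + 1) \<in> \<Phi>" using fc_prop(1)[OF F] j by auto
    moreover have "fc \<Phi> (j - 1) \<noteq> fc \<Phi> j" "fc \<Phi> (j + 1) \<noteq> fc \<Phi> j" using fc_ne[OF F] j by auto
    ultimately show "fc \<Phi> (j - 1) \<in> \<Psi>" "fc \<Phi> (j + 1) \<in> \<Psi>" using sub by auto
  qed
  have rr: "rk (fc \<Phi> (j - 1)) = j - 1" "rk (fc \<Phi> (j + 1)) = j + 1" using fc_prop(2)[OF F] j by auto
  have "leq (fc \<Phi> (j - 1)) y" "leq y (fc \<Phi> (j + 1))"
    using rk_le[OF G] lo yP ry rr by auto
  moreover have "y \<noteq> fc \<Phi> (j - 1)" "y \<noteq> fc \<Phi> (j + 1)" using ry rr by auto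
  moreover have "y \<in> P" using yP flag_sub[OF G] by auto
  ultimately have "y \<in> betw (fc \<Phi> (j - 1)) (fc \<Phi> (j + 1))" by (simp add: betw_def)
  then have "y = oth \<Phi> j" using betw_card[OF F j] yne by auto
  then show ?thesis using Psi by (simp add: adj_def)
qed

lemma fc_adj: assumes F: "flag \<Phi>" and j: "0 \<le> j" "j \<le> 3" and i: "-1 \<le> i" "i \<le> 4"
  shows "fc (adj j \<Phi>) i = (if i = j then oth \<Phi> j else fc \<Phi> i)"
proof -
  have G: "flag (adj j \<Phi>)" by (rule adj_flag[OF F j])
  show ?thesis
  proof (cases "i = j")
    case True then show ?thesis using fc_eqI[OF G] oth_prop[OF F j] by (simp add: adj_def)
  next
    case False
    then have "fc \<Phi> i \<noteq> fc \<Phi> j" using fc_ne[OF F] i j by auto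
    then have "fc \<Phi> i \<in> adj j \<Phi>" using fc_prop(1)[OF F] i by (auto simp: adj_def)
    then show ?thesis using fc_eqI[OF G] fc_prop[OF F] i False by simp
  qed
qed

lemma adj_adj: assumes F: "flag \<Phi>" and j: "0 \<le> j" "j \<le> 3" shows "adj j (adj j \<Phi>) = \<Phi>"
proof -
  have G: "flag (adj j \<Phi>)" by (rule adj_flag[OF F j])
  have "flag_adj P leq (adj j \<Phi>) j \<Phi>"
    unfolding flag_adj_def
  proof (intro conjI ballI impI)
    show "flag \<Phi>" by fact
    show "\<Phi> \<noteq> adj j \<Phi>" using adj_ne[OF F j] by simp
    fix x assume x: "x \<in> adj j \<Phi>" "\<not> face_rank P leq x j"
    then show "x \<in> \<Phi>" using oth_prop[OF F j] by (auto simp: adj_def face_rank_iff)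
  qed
  then show ?thesis using adj_unique[OF G j] by simp
qed

lemma oth_adj: assumes F: "flag \<Phi>" and j: "0 \<le> j" "j \<le> 3" and i: "0 \<le> i" "i \<le> 3" and ij: "\<bar>i - j\<bar> \<ge> 2"
  shows "oth (adj j \<Phi>) i = oth \<Phi> i"
  unfolding oth_def using fc_adj[OF F j] i ij by auto

lemma adj_comm: assumes F: "flag \<Phi>" and j: "0 \<le> j" "j \<le> 3" and i: "0 \<le> i" "i \<le> 3" and ij: "\<bar>i - j\<bar> \<ge> 2"
  shows "adj i (adj j \<Phi>) = adj j (adj i \<Phi>)"
proof -
  have e1: "adj i (adj j \<Phi>) = insert (oth \<Phi> i) (insert (oth \<Phi> j) (\<Phi> - {fc \<Phi> j}) - {fc \<Phi> i})"
    using fc_adj[OF F j, of i] oth_adj[OF F j i ij] i ij by (simp add: adj_def)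
  have ji: "\<bar>j - i\<bar> \<ge> 2" using ij by simp
  have e2: "adj j (adj i \<Phi>) = insert (oth \<Phi> j) (insert (oth \<Phi> i) (\<Phi> - {fc \<Phi> i}) - {fc \<Phi> j})"
    using fc_adj[OF F i, of j] oth_adj[OF F i j ji] j ij by (simp add: adj_def)
  have "oth \<Phi> j \<noteq> fc \<Phi> i" "oth \<Phi> i \<noteq> fc \<Phi> j"
  proof -
    have "rk (oth \<Phi> j) = j" "rk (oth \<Phi> i) = i" using oth_prop(2)[OF F j] oth_prop(2)[OF F i] by auto
    moreover have "rk (fc \<Phi> i) = i" "rk (fc \<Phi> j) = j" using fc_prop(2)[OF F] i j by auto
    moreover have "i \<noteq> j" using ij by auto
    ultimately show "oth \<Phi> j \<noteq> fc \<Phi> i" "oth \<Phi> i \<noteq> fc \<Phi> j" by metis+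
  qed
  then show ?thesis using e1 e2 by auto
qed

end


lemma aut_bij: "polytope_aut P leq \<sigma> \<Longrightarrow> bij_betw \<sigma> P P"
  by (simp add: polytope_aut_def Bij_def)
lemma aut_P: "polytope_aut P leq \<sigma> \<Longrightarrow> x \<in> P \<Longrightarrow> \<sigma> x \<in> P"
  using aut_bij bij_betwE by blast
lemma aut_inj: "polytope_aut P leq \<sigma> \<Longrightarrow> inj_on \<sigma> P"
  using aut_bij bij_betw_def by blast
lemma aut_leq: "polytope_aut P leq \<sigma> \<Longrightarrow> x \<in> P \<Longrightarrow> y \<in> P \<Longrightarrow> leq (\<sigma> x) (\<sigma> y) \<longleftrightarrow> leq x y"
  by (simp add: polytope_aut_def)

lemma bij_mult: "\<sigma> \<in> Bij P \<Longrightarrow> \<tau> \<in> Bij P \<Longrightarrow> \<sigma> \<otimes>\<^bsub>BijGroup P\<^esub> \<tau> = compose P \<sigma> \<tau>"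
  by (simp add: BijGroup_def)
lemma bij_one: "\<one>\<^bsub>BijGroup P\<^esub> = (\<lambda>x\<in>P. x)" by (simp add: BijGroup_def)
lemma bij_carrier: "carrier (BijGroup P) = Bij P" by (simp add: BijGroup_def)

lemma bij_img: assumes "\<sigma> \<in> Bij P" "\<tau> \<in> Bij P" "X \<subseteq> P"
  shows "(\<sigma> \<otimes>\<^bsub>BijGroup P\<^esub> \<tau>) ` X = \<sigma> ` (\<tau> ` X)"
proof -
  have "\<And>x. x \<in> X \<Longrightarrow> compose P \<sigma> \<tau> x = \<sigma> (\<tau> x)" using assms by (auto simp: compose_def)
  then show ?thesis using assms by (simp add: bij_mult image_image cong: image_cong)
qed

lemma one_eqI: assumes "\<sigma> \<in> Bij P" "\<And>x. x \<in> P \<Longrightarrow> \<sigma> x = x" shows "\<sigma> = \<one>\<^bsub>BijGroup P\<^esub>"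
proof -
  have "\<sigma> \<in> extensional P" using assms Bij_imp_extensional by blast
  then show ?thesis using assms unfolding bij_one by (auto simp: extensional_def)
qed

lemma aut_mult: assumes "polytope_aut P leq \<sigma>" "polytope_aut P leq \<tau>"
  shows "polytope_aut P leq (\<sigma> \<otimes>\<^bsub>BijGroup P\<^esub> \<tau>)"
proof -
  have B: "\<sigma> \<in> Bij P" "\<tau> \<in> Bij P" using assms by (auto simp: polytope_aut_def)
  have "compose P \<sigma> \<tau> \<in> Bij P" using compose_Bij B by blast
  moreover have "\<forall>x\<in>P. \<forall>y\<in>P. leq x y \<longleftrightarrow> leq (compose P \<sigma> \<tau> x) (compose P \<sigma> \<tau> y)"
    using assms aut_P[OF assms(2)] by (auto simp: compose_def aut_leq)
  ultimately show ?thesis using B by (simp add: polytope_aut_def bij_mult)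
qed

lemma aut_one: "polytope_aut P leq \<one>\<^bsub>BijGroup P\<^esub>"
  by (simp add: polytope_aut_def bij_one id_Bij)

lemma aut_inv: assumes A: "polytope_aut P leq \<sigma>" shows "polytope_aut P leq (inv\<^bsub>BijGroup P\<^esub> \<sigma>)"
proof -
  have B: "\<sigma> \<in> Bij P" using A by (simp add: polytope_aut_def)
  have bb: "bij_betw \<sigma> P P" using aut_bij[OF A] .
  have inv: "inv\<^bsub>BijGroup P\<^esub> \<sigma> = (\<lambda>x\<in>P. inv_into P \<sigma> x)" using inv_BijGroup[OF B] .
  have "\<forall>x\<in>P. \<forall>y\<in>P. leq x y \<longleftrightarrow> leq (inv_into P \<sigma> x) (inv_into P \<sigma> y)"
  proof (intro ballI)
    fix x y assume x: "x \<in> P" and y: "y \<in> P"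
    have "inv_into P \<sigma> x \<in> P" "inv_into P \<sigma> y \<in> P" using Bij_inv_into_mem[OF B x] Bij_inv_into_mem[OF B y] by auto
    moreover have "\<sigma> (inv_into P \<sigma> x) = x" "\<sigma> (inv_into P \<sigma> y) = y" using bb x y by (auto simp: bij_betw_inv_into_right)
    ultimately show "leq x y \<longleftrightarrow> leq (inv_into P \<sigma> x) (inv_into P \<sigma> y)" using aut_leq[OF A] by metis
  qed
  then show ?thesis using restrict_inv_into_Bij[OF B] inv by (simp add: polytope_aut_def)
qed

lemma aut_carrier: "polytope_aut P leq \<sigma> \<Longrightarrow> \<sigma> \<in> carrier (BijGroup P)"
  by (simp add: polytope_aut_def bij_carrier)

lemma aut_subgroup: "subgroup {\<sigma>. polytope_aut P leq \<sigma>} (BijGroup P)"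
  unfolding subgroup_def using aut_carrier aut_one aut_mult aut_inv by blast

lemma aut_pow: "polytope_aut P leq \<sigma> \<Longrightarrow> polytope_aut P leq (\<sigma> [^]\<^bsub>BijGroup P\<^esub> (k::int))"
proof -
  assume A: "polytope_aut P leq \<sigma>"
  have "\<sigma> [^]\<^bsub>BijGroup P\<^esub> k \<in> {\<sigma>. polytope_aut P leq \<sigma>}"
    by (rule group.subgroup_int_pow_closed[OF group_BijGroup aut_subgroup]) (use A in simp)
  then show ?thesis by simp
qed

lemma aut_pow_nat: "polytope_aut P leq \<sigma> \<Longrightarrow> polytope_aut P leq (\<sigma> [^]\<^bsub>BijGroup P\<^esub> (k::nat))"
  using aut_pow[where \<sigma>=\<sigma> and k="int k"] by (simp add: int_pow_int)

context P4 begin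

lemma aut_flag: assumes A: "polytope_aut P leq \<sigma>" and F: "flag \<Phi>" shows "flag (\<sigma> ` \<Phi>)"
  unfolding is_flag_def
proof (intro conjI ballI impI)
  have sP: "\<Phi> \<subseteq> P" using flag_sub[OF F] .
  show ch: "po_chain P leq (\<sigma> ` \<Phi>)"
    using flag_chain[OF F] sP aut_P[OF A] aut_leq[OF A] by (auto simp: po_chain_def subset_iff)
  fix y assume y: "y \<in> P" and ch2: "po_chain P leq (insert y (\<sigma> ` \<Phi>))"
  obtain y' where y': "y' \<in> P" "y = \<sigma> y'" using aut_bij[OF A] y by (metis bij_betw_iff_bijections)
  have "po_chain P leq (insert y' \<Phi>)"
    unfolding po_chain_def
  proof (intro conjI ballI)
    show "insert y' \<Phi> \<subseteq> P" using y' sP by auto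
    fix u v assume "u \<in> insert y' \<Phi>" "v \<in> insert y' \<Phi>"
    then have "\<sigma> u \<in> insert y (\<sigma> ` \<Phi>)" "\<sigma> v \<in> insert y (\<sigma> ` \<Phi>)" "u \<in> P" "v \<in> P" using y' sP by auto
    then show "leq u v \<or> leq v u" using ch2 aut_leq[OF A] unfolding po_chain_def by blast
  qed
  then have "y' \<in> \<Phi>" using flag_max[OF F y'(1)] by simp
  then show "y \<in> \<sigma> ` \<Phi>" using y' by simp
qed

lemma aut_rk: assumes A: "polytope_aut P leq \<sigma>" and x: "x \<in> P" shows "rk (\<sigma> x) = rk x"
proof -
  obtain \<Phi> where F: "flag \<Phi>" "x \<in> \<Phi>" using in_some_flag x by blast
  have sP: "\<Phi> \<subseteq> P" using flag_sub[OF F(1)] .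
  have G: "flag (\<sigma> ` \<Phi>)" using aut_flag[OF A F(1)] .
  have inj: "inj_on \<sigma> P" using aut_inj[OF A] .
  have "bel (\<sigma> ` \<Phi>) (\<sigma> x) = \<sigma> ` bel \<Phi> x"
    using sP x aut_leq[OF A] inj by (auto simp: bel_def inj_on_def subset_iff)
  moreover have "card (\<sigma> ` bel \<Phi> x) = card (bel \<Phi> x)"
    using inj sP by (intro card_image) (auto simp: bel_def intro: inj_on_subset)
  ultimately show ?thesis using rk_flag[OF G] rk_flag[OF F] F by simp
qed

lemma aut_adj: assumes A: "polytope_aut P leq \<sigma>" and F: "flag \<Phi>" and j: "0 \<le> j" "j \<le> 3"
  shows "\<sigma> ` (adj j \<Phi>) = adj j (\<sigma> ` \<Phi>)"
proof -
  have G: "flag (\<sigma> ` \<Phi>)" using aut_flag[OF A F] .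
  have sP: "\<Phi> \<subseteq> P" using flag_sub[OF F] .
  have aF: "flag (adj j \<Phi>)" using adj_flag[OF F j] .
  have inj: "inj_on \<sigma> P" using aut_inj[OF A] .
  have "flag_adj P leq (\<sigma> ` \<Phi>) j (\<sigma> ` (adj j \<Phi>))"
    unfolding flag_adj_def
  proof (intro conjI ballI impI)
    show "flag (\<sigma> ` adj j \<Phi>)" using aut_flag[OF A aF] .
    show "\<sigma> ` adj j \<Phi> \<noteq> \<sigma> ` \<Phi>"
    proof
      assume "\<sigma> ` adj j \<Phi> = \<sigma> ` \<Phi>"
      then have "adj j \<Phi> = \<Phi>" using inj sP flag_sub[OF aF] by (simp add: inj_on_image_eq_iff)
      then show False using adj_ne[OF F j] by simp
    qed
    fix y assume y: "y \<in> \<sigma> ` \<Phi>" and nr: "\<not> face_rank P leq y j"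
    then obtain x where x: "x \<in> \<Phi>" "y = \<sigma> x" by blast
    then have "rk x \<noteq> j" using nr aut_rk[OF A] sP aut_P[OF A] by (auto simp: face_rank_iff)
    then have "x \<noteq> fc \<Phi> j" using fc_prop(2)[OF F] j by auto
    then have "x \<in> adj j \<Phi>" using x by (simp add: adj_def)
    then show "y \<in> \<sigma> ` adj j \<Phi>" using x by simp
  qed
  then show ?thesis using adj_unique[OF G j] by simp
qed

lemma min_rk_fc: assumes F: "flag \<Phi>" shows "\<exists>m. fc \<Phi> (-1) = m \<and> m \<in> P \<and> (\<forall>x\<in>P. leq m x)"
proof -
  obtain m where m: "m \<in> P" "\<forall>x\<in>P. leq m x" using has_min by blast
  then have "m \<in> \<Phi>" "rk m = -1" using min_in_flag[OF F] rk_min by auto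
  then show ?thesis using fc_eqI[OF F] m by auto
qed

lemma max_rk_fc: assumes F: "flag \<Phi>" shows "\<exists>M. fc \<Phi> 4 = M \<and> M \<in> P \<and> (\<forall>x\<in>P. leq x M)"
proof -
  obtain M where M: "M \<in> P" "\<forall>x\<in>P. leq x M" using has_max by blast
  then have "M \<in> \<Phi>" "rk M = 4" using max_in_flag[OF F] rk_max by auto
  then show ?thesis using fc_eqI[OF F] M by auto
qed

lemma adjacent_adj: assumes A: "flag A" and B: "flag B" and ad: "adjacent_flags A B"
  shows "\<exists>t. 0 \<le> t \<and> t \<le> 3 \<and> B = adj t A"
proof -
  have finA: "finite A" using flag_card[OF A] by simp
  have "card (A - B) = 1" using ad by (simp add: adjacent_flags_def)
  then obtain x where x: "A - B = {x}" by (meson card_1_singletonE)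
  then have xA: "x \<in> A" and xB: "x \<notin> B" by auto
  define t where "t = rk x"
  have tr: "-1 \<le> t" "t \<le> 4" using rk_range[OF A xA] by (auto simp: t_def)
  have "t \<noteq> -1"
  proof
    assume "t = -1"
    obtain m where m: "fc A (-1) = m" "m \<in> P" "\<forall>x\<in>P. leq m x" using min_rk_fc[OF A] by blast
    have "x = m" using fc_eqI[OF A xA] \<open>t = -1\<close> m by (simp add: t_def)
    then show False using min_in_flag[OF B] m xB by simp
  qed
  moreover have "t \<noteq> 4"
  proof
    assume "t = 4"
    obtain M where M: "fc A 4 = M" "M \<in> P" "\<forall>x\<in>P. leq x M" using max_rk_fc[OF A] by blast
    have "x = M" using fc_eqI[OF A xA] \<open>t = 4\<close> M by (simp add: t_def)
    then show False using max_in_flag[OF B] M xB by simp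
  qed
  ultimately have t: "0 \<le> t" "t \<le> 3" using tr by auto
  have "flag_adj P leq A t B"
    unfolding flag_adj_def
  proof (intro conjI ballI impI)
    show "flag B" by fact
    show "B \<noteq> A" using xA xB by blast
    fix y assume y: "y \<in> A" "\<not> face_rank P leq y t"
    then have "y \<noteq> x" using flag_sub[OF A] xA by (auto simp: face_rank_iff t_def)
    then show "y \<in> B" using x y by blast
  qed
  then show ?thesis using adj_unique[OF A t] t by blast
qed

lemma fix_id: assumes T: "polytope_aut P leq \<tau>" and F: "flag \<Phi>" and fx: "\<tau> ` \<Phi> = \<Phi>"
  shows "\<tau> = \<one>\<^bsub>BijGroup P\<^esub>"
proof (rule one_eqI)
  show "\<tau> \<in> Bij P" using T by (simp add: polytope_aut_def)
  fix x assume x: "x \<in> P"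
  obtain \<Psi> where G: "flag \<Psi>" "x \<in> \<Psi>" using in_some_flag x by blast
  have "(\<lambda>A B. flag A \<and> flag B \<and> adjacent_flags A B \<and> \<Phi> \<inter> \<Psi> \<subseteq> A \<and> \<Phi> \<inter> \<Psi> \<subseteq> B)\<^sup>*\<^sup>* \<Phi> \<Psi>"
    using conn[OF F G(1)] .
  then have "\<tau> ` \<Psi> = \<Psi>"
  proof (induction rule: rtranclp_induct)
    case base then show ?case using fx .
  next
    case (step A B)
    then have A: "flag A" and B: "flag B" and ad: "adjacent_flags A B" by auto
    obtain t where t: "0 \<le> t" "t \<le> 3" "B = adj t A" using adjacent_adj[OF A B ad] by blast
    then show ?case using aut_adj[OF T A t(1,2)] step.IH by simp
  qed
  then have "\<tau> x \<in> \<Psi>" using G by blast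
  moreover have "rk (\<tau> x) = rk x" using aut_rk[OF T x] .
  ultimately show "\<tau> x = x" using rk_inj[OF G(1)] G(2) by blast
qed

end

context P4 begin

definition FixS :: "'a set \<Rightarrow> int \<Rightarrow> 'a set" where
  "FixS \<Phi> j = \<Phi> - {fc \<Phi> (j - 1), fc \<Phi> j}"
definition Sec :: "'a set \<Rightarrow> int \<Rightarrow> 'a set set" where
  "Sec \<Phi> j = {\<Psi>. flag \<Psi> \<and> FixS \<Phi> j \<subseteq> \<Psi>}"
definition Rot :: "int \<Rightarrow> 'a set \<Rightarrow> 'a set" where
  "Rot j \<Psi> = adj (j - 1) (adj j \<Psi>)"

lemma FixS_fc: assumes F: "flag \<Phi>" and i: "-1 \<le> i" "i \<le> 4" "i \<noteq> j - 1" "i \<noteq> j" and j: "1 \<le> j" "j \<le> 3"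
  shows "fc \<Phi> i \<in> FixS \<Phi> j"
proof -
  have "fc \<Phi> i \<noteq> fc \<Phi> (j - 1)" "fc \<Phi> i \<noteq> fc \<Phi> j" using fc_ne[OF F] i j by auto
  then show ?thesis using fc_prop(1)[OF F i(1,2)] by (simp add: FixS_def)
qed

lemma sec_fc: assumes F: "flag \<Phi>" and j: "1 \<le> j" "j \<le> 3" and S: "\<Psi> \<in> Sec \<Phi> j"
  and i: "-1 \<le> i" "i \<le> 4" "i \<noteq> j - 1" "i \<noteq> j"
  shows "fc \<Psi> i = fc \<Phi> i"
proof -
  have G: "flag \<Psi>" and sub: "FixS \<Phi> j \<subseteq> \<Psi>" using S by (auto simp: Sec_def)
  have "fc \<Phi> i \<in> \<Psi>" using FixS_fc[OF F i j] sub by auto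
  then show ?thesis using fc_eqI[OF G] fc_prop(2)[OF F i(1,2)] by simp
qed

lemma FixS_rk: assumes F: "flag \<Phi>" and g: "g \<in> FixS \<Phi> j"
  shows "rk g \<noteq> j - 1" "rk g \<noteq> j" "g \<in> \<Phi>"
proof -
  have gF: "g \<in> \<Phi>" using g by (simp add: FixS_def)
  then show "g \<in> \<Phi>" .
  have "fc \<Phi> (rk g) = g" using fc_eq[OF F gF] .
  then show "rk g \<noteq> j - 1" "rk g \<noteq> j" using g by (auto simp: FixS_def)
qed

lemma sec_self: "flag \<Phi> \<Longrightarrow> \<Phi> \<in> Sec \<Phi> j" by (auto simp: Sec_def FixS_def)

lemma sec_adj: assumes F: "flag \<Phi>" and j: "1 \<le> j" "j \<le> 3" and S: "\<Psi> \<in> Sec \<Phi> j"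
  and t: "t = j - 1 \<or> t = j"
  shows "adj t \<Psi> \<in> Sec \<Phi> j"
proof -
  have G: "flag \<Psi>" and sub: "FixS \<Phi> j \<subseteq> \<Psi>" using S by (auto simp: Sec_def)
  have t': "0 \<le> t" "t \<le> 3" using t j by auto
  have "fc \<Psi> t \<notin> FixS \<Phi> j"
  proof
    assume a: "fc \<Psi> t \<in> FixS \<Phi> j"
    have "rk (fc \<Psi> t) = t" using fc_prop(2)[OF G] t' by auto
    then show False using FixS_rk[OF F a] t by auto
  qed
  then have "FixS \<Phi> j \<subseteq> adj t \<Psi>" using sub by (auto simp: adj_def)
  then show ?thesis using adj_flag[OF G t'] by (simp add: Sec_def)
qed

lemma sec_Rot: assumes F: "flag \<Phi>" and j: "1 \<le> j" "j \<le> 3" and S: "\<Psi> \<in> Sec \<Phi> j"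
  shows "Rot j \<Psi> \<in> Sec \<Phi> j"
proof -
  have "adj j \<Psi> \<in> Sec \<Phi> j" by (rule sec_adj[OF F j S]) simp
  then show ?thesis unfolding Rot_def by (rule sec_adj[OF F j]) simp
qed

lemma Rot_inj: assumes F: "flag \<Phi>" and j: "1 \<le> j" "j \<le> 3" shows "inj_on (Rot j) (Sec \<Phi> j)"
proof (rule inj_onI)
  fix A B assume A: "A \<in> Sec \<Phi> j" and B: "B \<in> Sec \<Phi> j" and e: "Rot j A = Rot j B"
  have fA: "flag A" "flag B" using A B by (auto simp: Sec_def)
  have j1: "0 \<le> j - 1" "j - 1 \<le> 3" "0 \<le> j" "j \<le> 3" using j by auto
  have "adj j (adj (j - 1) (Rot j A)) = A"
    unfolding Rot_def using adj_adj[OF adj_flag[OF fA(1) j1(3,4)] j1(1,2)] adj_adj[OF fA(1) j1(3,4)] by simp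
  moreover have "adj j (adj (j - 1) (Rot j B)) = B"
    unfolding Rot_def using adj_adj[OF adj_flag[OF fA(2) j1(3,4)] j1(1,2)] adj_adj[OF fA(2) j1(3,4)] by simp
  ultimately show "A = B" using e by metis
qed

lemma sec_finite: "finite {\<Psi>. flag \<Psi>} \<Longrightarrow> finite (Sec \<Phi> j)"
  by (rule finite_subset[of _ "{\<Psi>. flag \<Psi>}"]) (auto simp: Sec_def)

end

context P4 begin

lemma sec_conn: assumes F: "flag \<Phi>" and j: "1 \<le> j" "j \<le> 3" and S: "\<Psi> \<in> Sec \<Phi> j"
  and X0: "\<Phi> \<in> X"
  and Xj: "\<And>A. A \<in> X \<Longrightarrow> A \<in> Sec \<Phi> j \<Longrightarrow> adj j A \<in> X"
  and Xj1: "\<And>A. A \<in> X \<Longrightarrow> A \<in> Sec \<Phi> j \<Longrightarrow> adj (j - 1) A \<in> X"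
  shows "\<Psi> \<in> X"
proof -
  have G: "flag \<Psi>" and subP: "FixS \<Phi> j \<subseteq> \<Psi>" using S by (auto simp: Sec_def)
  have subF: "FixS \<Phi> j \<subseteq> \<Phi> \<inter> \<Psi>" using subP by (auto simp: FixS_def)
  have "(\<lambda>A B. flag A \<and> flag B \<and> adjacent_flags A B \<and> \<Phi> \<inter> \<Psi> \<subseteq> A \<and> \<Phi> \<inter> \<Psi> \<subseteq> B)\<^sup>*\<^sup>* \<Phi> \<Psi>"
    using conn[OF F G] .
  then show ?thesis
  proof (induction rule: rtranclp_induct)
    case base then show ?case using X0 .
  next
    case (step A B)
    then have A: "flag A" and B: "flag B" and ad: "adjacent_flags A B"
      and sA: "\<Phi> \<inter> \<Psi> \<subseteq> A" and sB: "\<Phi> \<inter> \<Psi> \<subseteq> B" and AX: "A \<in> X" by auto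
    have AS: "A \<in> Sec \<Phi> j" using A sA subF by (auto simp: Sec_def)
    obtain t where t: "0 \<le> t" "t \<le> 3" "B = adj t A" using adjacent_adj[OF A B ad] by blast
    have "t = j - 1 \<or> t = j"
    proof (rule ccontr)
      assume nt: "\<not> (t = j - 1 \<or> t = j)"
      then have "fc A t = fc \<Phi> t" using sec_fc[OF F j AS] t by auto
      moreover have "fc \<Phi> t \<in> FixS \<Phi> j" using FixS_fc[OF F _ _ _ _ j] nt t by auto
      ultimately have "fc A t \<in> B" using subF sB by auto
      moreover have "fc A t \<notin> adj t A" using oth_prop(4)[OF A t(1,2)] by (auto simp: adj_def)
      ultimately show False using t by simp
    qed
    then show ?case using Xj[OF AX AS] Xj1[OF AX AS] t by auto
  qed
qed

definition Vs :: "'a set \<Rightarrow> int \<Rightarrow> 'a set" where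
  "Vs \<Phi> j = {v\<in>P. rk v = j - 1 \<and> leq (fc \<Phi> (j - 2)) v \<and> leq v (fc \<Phi> (j + 1))}"

lemma sec_count: assumes fin: "finite {\<Psi>. flag \<Psi>}" and F: "flag \<Phi>" and j: "1 \<le> j" "j \<le> 3"
  shows "card (Sec \<Phi> j) = 2 * card (Vs \<Phi> j)"
proof -
  define hi where "hi = fc \<Phi> (j + 1)"
  define lo where "lo = fc \<Phi> (j - 2)"
  define g where "g = (\<lambda>\<Psi>. (fc \<Psi> (j - 1), fc \<Psi> j))"
  define T where "T = Sigma (Vs \<Phi> j) (\<lambda>v. betw v hi)"
  have hiP: "hi \<in> P" "rk hi = j + 1" using fcP[OF F] fc_prop[OF F] j by (auto simp: hi_def)
  have loP: "lo \<in> P" "rk lo = j - 2" using fcP[OF F] fc_prop[OF F] j by (auto simp: lo_def)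
  have sP: "\<Phi> \<subseteq> P" using flag_sub[OF F] .
  have fixlow: "\<And>x. x \<in> FixS \<Phi> j \<Longrightarrow> rk x < j - 1 \<Longrightarrow> leq x lo"
  proof -
    fix x assume x: "x \<in> FixS \<Phi> j" and r: "rk x < j - 1"
    have "x \<in> \<Phi>" using FixS_rk[OF F x] by simp
    moreover have "lo \<in> \<Phi>" using fc_prop[OF F] j by (auto simp: lo_def)
    ultimately show "leq x lo" using rk_le[OF F] r loP by simp
  qed
  have fixhigh: "\<And>x. x \<in> FixS \<Phi> j \<Longrightarrow> \<not> rk x < j - 1 \<Longrightarrow> leq hi x"
  proof -
    fix x assume x: "x \<in> FixS \<Phi> j" and r: "\<not> rk x < j - 1"
    have "x \<in> \<Phi>" "rk x \<noteq> j - 1" "rk x \<noteq> j" using FixS_rk[OF F x] by auto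
    moreover have "hi \<in> \<Phi>" using fc_prop[OF F] j by (auto simp: hi_def)
    ultimately show "leq hi x" using rk_le[OF F] r hiP by simp
  qed
  have fixP: "FixS \<Phi> j \<subseteq> P" using sP by (auto simp: FixS_def)
  have inj: "inj_on g (Sec \<Phi> j)"
  proof (rule inj_onI)
    fix A B assume A: "A \<in> Sec \<Phi> j" and B: "B \<in> Sec \<Phi> j" and e: "g A = g B"
    have fA: "flag A" "flag B" using A B by (auto simp: Sec_def)
    have all: "\<forall>i\<in>{-1..4}. fc A i = fc B i"
    proof
      fix i :: int assume i: "i \<in> {-1..4}"
      show "fc A i = fc B i"
      proof (cases "i = j - 1 \<or> i = j")
        case True then show ?thesis using e by (auto simp: g_def)
      next
        case False then show ?thesis using sec_fc[OF F j A] sec_fc[OF F j B] i by auto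
      qed
    qed
    have "fc A ` {-1..4} = fc B ` {-1..4}" by (rule image_cong[OF refl]) (use all in blast)
    then show "A = B" using flag_fc[OF fA(1)] flag_fc[OF fA(2)] by simp
  qed
  have img: "g ` Sec \<Phi> j = T"
  proof
    show "g ` Sec \<Phi> j \<subseteq> T"
    proof
      fix p assume "p \<in> g ` Sec \<Phi> j"
      then obtain \<Psi> where S: "\<Psi> \<in> Sec \<Phi> j" and p: "p = g \<Psi>" by blast
      have G: "flag \<Psi>" using S by (simp add: Sec_def)
      have e1: "fc \<Psi> (j + 1) = hi" "fc \<Psi> (j - 2) = lo" using sec_fc[OF F j S] j by (auto simp: hi_def lo_def)
      have l1: "leq (fc \<Psi> (j - 2)) (fc \<Psi> (j - 1))" "leq (fc \<Psi> (j - 1)) (fc \<Psi> (j + 1))"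
        using fc_le[OF G] j by auto
      have "fc \<Psi> (j - 1) \<in> P" "rk (fc \<Psi> (j - 1)) = j - 1" using fcP[OF G] fc_prop[OF G] j by auto
      then have "fc \<Psi> (j - 1) \<in> Vs \<Phi> j"
        unfolding Vs_def using l1 e1 by (simp add: hi_def lo_def)
      moreover have "fc \<Psi> j \<in> betw (fc \<Psi> (j - 1)) hi"
      proof -
        have "fc \<Psi> j \<noteq> fc \<Psi> (j - 1)" "fc \<Psi> j \<noteq> fc \<Psi> (j + 1)" using fc_ne[OF G] j by auto
        moreover have "leq (fc \<Psi> (j - 1)) (fc \<Psi> j)" "leq (fc \<Psi> j) (fc \<Psi> (j + 1))" using fc_le[OF G] j by auto
        moreover have "fc \<Psi> j \<in> P" using fcP[OF G] j by auto
        ultimately show ?thesis unfolding betw_def using e1 by simp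
      qed
      ultimately show "p \<in> T" using p by (simp add: T_def g_def)
    qed
  next
    show "T \<subseteq> g ` Sec \<Phi> j"
    proof
      fix p assume "p \<in> T"
      then obtain v h where p: "p = (v, h)" and v: "v \<in> Vs \<Phi> j" and h: "h \<in> betw v hi" by (auto simp: T_def)
      have vP: "v \<in> P" "rk v = j - 1" "leq lo v" "leq v hi" using v by (auto simp: Vs_def lo_def hi_def)
      have hP: "h \<in> P" "h \<noteq> v" "h \<noteq> hi" "leq v h" "leq h hi" using h by (auto simp: betw_def)
      have rh: "rk h = j" using rk_mono[OF vP(1) hP(1) hP(4)] rk_mono[OF hP(1) hiP(1) hP(5) hP(3)] hP(2) vP(2) hiP(2) by auto
      define \<Psi> where "\<Psi> = insert v (insert h (FixS \<Phi> j))"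
      have vF: "v \<notin> FixS \<Phi> j" using FixS_rk[OF F] vP by auto
      have hF: "h \<notin> FixS \<Phi> j" using FixS_rk[OF F] rh by auto
      have ch: "po_chain P leq \<Psi>"
        unfolding po_chain_def
      proof (intro conjI ballI)
        show "\<Psi> \<subseteq> P" using fixP vP hP by (auto simp: \<Psi>_def)
        fix x y assume x: "x \<in> \<Psi>" and y: "y \<in> \<Psi>"
        have key: "\<And>u f. u \<in> {v, h} \<Longrightarrow> f \<in> FixS \<Phi> j \<Longrightarrow> leq u f \<or> leq f u"
        proof -
          fix u f assume u: "u \<in> {v, h}" and f: "f \<in> FixS \<Phi> j"
          have uP: "u \<in> P" "leq lo u" "leq u hi" using u vP hP ptrans[of lo v h] loP by auto
          have fP: "f \<in> P" using f fixP by auto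
          show "leq u f \<or> leq f u"
          proof (cases "rk f < j - 1")
            case True
            then have "leq f lo" using fixlow f by blast
            then show ?thesis using ptrans[of f lo u] fP loP uP by auto
          next
            case False
            then have "leq hi f" using fixhigh f by blast
            then show ?thesis using ptrans[of u hi f] fP hiP uP by auto
          qed
        qed
        have ff: "\<And>a b. a \<in> FixS \<Phi> j \<Longrightarrow> b \<in> FixS \<Phi> j \<Longrightarrow> leq a b \<or> leq b a"
          using flag_comp[OF F] by (auto simp: FixS_def)
        show "leq x y \<or> leq y x"
          using x y key ff prefl vP hP unfolding \<Psi>_def by blast
      qed
      have c4: "card (FixS \<Phi> j) = 4"
      proof -
        have "fc \<Phi> (j - 1) \<in> \<Phi>" "fc \<Phi> j \<in> \<Phi>" "fc \<Phi> (j - 1) \<noteq> fc \<Phi> j" using fc_prop[OF F] fc_ne[OF F] j by auto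
        then show ?thesis using flag_card[OF F] by (simp add: FixS_def card_Diff_subset)
      qed
      have "card \<Psi> = 6" using c4 vF hF hP(2) flag_card[OF F] by (simp add: \<Psi>_def FixS_def)
      then have G: "flag \<Psi>" using six_flag[OF ch] by simp
      then have S: "\<Psi> \<in> Sec \<Phi> j" by (auto simp: Sec_def \<Psi>_def)
      have "fc \<Psi> (j - 1) = v" "fc \<Psi> j = h" using fc_eqI[OF G] vP rh by (auto simp: \<Psi>_def)
      then have "g \<Psi> = p" using p by (simp add: g_def)
      then show "p \<in> g ` Sec \<Phi> j" using S by blast
    qed
  qed
  have finS: "finite (Sec \<Phi> j)" using sec_finite[OF fin] .
  have bcard: "\<And>v. v \<in> Vs \<Phi> j \<Longrightarrow> card (betw v hi) = 2"
  proof -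
    fix v assume v: "v \<in> Vs \<Phi> j"
    have "face_rank P leq v (j - 1)" "face_rank P leq hi (j + 1)" "leq v hi"
      using v hiP by (auto simp: Vs_def face_rank_iff hi_def)
    then show "card (betw v hi) = 2" unfolding betw_def by (rule diamond)
  qed
  have finV: "finite (Vs \<Phi> j)"
  proof -
    have "Vs \<Phi> j \<subseteq> fst ` T"
    proof
      fix v assume v: "v \<in> Vs \<Phi> j"
      then have "betw v hi \<noteq> {}" using bcard[OF v] by auto
      then obtain h where "h \<in> betw v hi" by blast
      then show "v \<in> fst ` T" using v by (force simp: T_def)
    qed
    moreover have "finite T" using img finS by (metis finite_imageI)
    ultimately show ?thesis by (meson finite_imageI finite_subset)
  qed
  have "card (Sec \<Phi> j) = card T" using card_image[OF inj] img by simp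
  also have "\<dots> = (\<Sum>v\<in>Vs \<Phi> j. card (betw v hi))"
    unfolding T_def by (rule card_SigmaI) (use finV bcard in \<open>auto intro: card_ge_0_finite\<close>)
  also have "\<dots> = (\<Sum>v\<in>Vs \<Phi> j. 2)" using bcard by simp
  also have "\<dots> = 2 * card (Vs \<Phi> j)" by simp
  finally show ?thesis .
qed

end

context P4 begin

lemma sec_period: assumes fin: "finite {\<Psi>. flag \<Psi>}" and F: "flag \<Phi>" and j: "1 \<le> j" "j \<le> 3"
  and disj: "\<And>k l. (Rot j ^^ k) \<Phi> \<noteq> adj j ((Rot j ^^ l) \<Phi>)"
  shows "(Rot j ^^ card (Vs \<Phi> j)) \<Phi> = \<Phi>" "\<And>k. 0 < k \<Longrightarrow> k < card (Vs \<Phi> j) \<Longrightarrow> (Rot j ^^ k) \<Phi> \<noteq> \<Phi>"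
proof -
  define R where "R = Rot j"
  define S where "S = Sec \<Phi> j"
  have finS: "finite S" using sec_finite[OF fin] by (simp add: S_def)
  have RS: "R ` S \<subseteq> S" using sec_Rot[OF F j] by (auto simp: R_def S_def)
  have injR: "inj_on R S" using Rot_inj[OF F j] by (simp add: R_def S_def)
  have PhiS: "\<Phi> \<in> S" using sec_self[OF F] by (simp add: S_def)
  obtain N where N: "N > 0" "(R ^^ N) \<Phi> = \<Phi>" "\<forall>k. 0 < k \<and> k < N \<longrightarrow> (R ^^ k) \<Phi> \<noteq> \<Phi>"
    and cO: "card {(R ^^ k) \<Phi> | k. True} = N"
    using orbit_period[OF finS RS injR PhiS] by blast
  define Ob where "Ob = {(R ^^ k) \<Phi> | k. True}"
  have OS: "Ob \<subseteq> S" using funpow_in[OF RS PhiS] by (auto simp: Ob_def)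
  have j1: "0 \<le> j - 1" "j - 1 \<le> 3" "0 \<le> j" "j \<le> 3" using j by auto
  have flagS: "\<And>A. A \<in> S \<Longrightarrow> flag A" by (simp add: S_def Sec_def)
  let ?X = "Ob \<union> adj j ` Ob"
  have cover: "S \<subseteq> ?X"
  proof
    fix \<Psi> assume \<Psi>: "\<Psi> \<in> S"
    show "\<Psi> \<in> ?X"
    proof (rule sec_conn[OF F j])
      show "\<Psi> \<in> Sec \<Phi> j" using \<Psi> by (simp add: S_def)
      show "\<Phi> \<in> ?X" unfolding Ob_def by (metis (mono_tags) UnI1 funpow_0 mem_Collect_eq)
    next
      fix A assume AX: "A \<in> ?X" and AS: "A \<in> Sec \<Phi> j"
      show "adj j A \<in> ?X"
      proof (cases "A \<in> Ob")
        case True then show ?thesis by blast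
      next
        case False
        then obtain B where B: "B \<in> Ob" "A = adj j B" using AX by blast
        have "flag B" using B OS flagS by auto
        then have "adj j A = B" using adj_adj j1 B by simp
        then show ?thesis using B by simp
      qed
    next
      fix A assume AX: "A \<in> ?X" and AS: "A \<in> Sec \<Phi> j"
      show "adj (j - 1) A \<in> ?X"
      proof (cases "A \<in> Ob")
        case True
        then obtain k where k: "A = (R ^^ k) \<Phi>" by (auto simp: Ob_def)
        have "A = (R ^^ (k + N)) \<Phi>" using k N(2) by (simp add: funpow_add)
        moreover obtain m where m: "k + N = Suc m" using N(1) by (metis add_gr_0 Suc_pred)
        ultimately have A2: "A = adj (j - 1) (adj j ((R ^^ m) \<Phi>))" by (simp add: R_def Rot_def)
        have Bf: "flag ((R ^^ m) \<Phi>)" using funpow_in[OF RS PhiS] flagS by auto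
        have "adj (j - 1) A = adj j ((R ^^ m) \<Phi>)"
          using A2 adj_adj[OF adj_flag[OF Bf j1(3,4)] j1(1,2)] by simp
        moreover have "(R ^^ m) \<Phi> \<in> Ob" by (auto simp: Ob_def)
        ultimately show ?thesis by blast
      next
        case False
        then obtain B where B: "B \<in> Ob" "A = adj j B" using AX by blast
        then obtain k where k: "B = (R ^^ k) \<Phi>" by (auto simp: Ob_def)
        have "adj (j - 1) A = (R ^^ Suc k) \<Phi>" using B k by (simp add: R_def Rot_def)
        moreover have "(R ^^ Suc k) \<Phi> \<in> Ob" unfolding Ob_def by blast
        ultimately show ?thesis by simp
      qed
    qed
  qed
  have XS: "?X \<subseteq> S" using OS sec_adj[OF F j] by (auto simp: S_def)
  have SX: "S = ?X" using cover XS by blast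
  have dj: "Ob \<inter> adj j ` Ob = {}" using disj by (auto simp: Ob_def R_def)
  have injA: "inj_on (adj j) Ob"
  proof (rule inj_onI)
    fix A B assume "A \<in> Ob" "B \<in> Ob" "adj j A = adj j B"
    then show "A = B" using adj_adj[OF _ j1(3,4)] OS flagS by (metis subsetD)
  qed
  have finO: "finite Ob" using finS OS finite_subset by blast
  have "card S = card Ob + card (adj j ` Ob)" using SX dj finO by (simp add: card_Un_disjoint)
  also have "\<dots> = 2 * N" using card_image[OF injA] cO by (simp add: Ob_def)
  finally have "card S = 2 * N" .
  then have NV: "N = card (Vs \<Phi> j)" using sec_count[OF fin F j] by (simp add: S_def)
  show "(Rot j ^^ card (Vs \<Phi> j)) \<Phi> = \<Phi>" using N NV by (simp add: R_def)
  show "\<And>k. 0 < k \<Longrightarrow> k < card (Vs \<Phi> j) \<Longrightarrow> (Rot j ^^ k) \<Phi> \<noteq> \<Phi>" using N NV by (simp add: R_def)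
qed

end

context P4 begin

abbreviation "GG \<equiv> BijGroup P"

lemma one_img: "X \<subseteq> P \<Longrightarrow> \<one>\<^bsub>GG\<^esub> ` X = X"
  by (auto simp: bij_one)

lemma aut_img_mult: "polytope_aut P leq x \<Longrightarrow> polytope_aut P leq y \<Longrightarrow> X \<subseteq> P \<Longrightarrow> (x \<otimes>\<^bsub>GG\<^esub> y) ` X = x ` (y ` X)"
  by (rule bij_img) (auto simp: polytope_aut_def)

lemma std_img: assumes sg: "std_gens P leq \<Phi> s1 s2 s3"
  shows "flag \<Phi>" "polytope_aut P leq s1" "polytope_aut P leq s2" "polytope_aut P leq s3"
    "s1 ` \<Phi> = adj 0 (adj 1 \<Phi>)" "s2 ` \<Phi> = adj 1 (adj 2 \<Phi>)" "s3 ` \<Phi> = adj 2 (adj 3 \<Phi>)"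
proof -
  show F: "flag \<Phi>" using sg by (simp add: std_gens_def)
  have h: "\<And>i s. (i, s) \<in> {(1::int, s1), (2, s2), (3, s3)} \<Longrightarrow>
      polytope_aut P leq s \<and> (\<exists>\<Psi>. flag_adj P leq \<Phi> i \<Psi> \<and> flag_adj P leq \<Psi> (i - 1) (s ` \<Phi>))"
    using sg unfolding std_gens_def by blast
  have gen: "\<And>i s. (i, s) \<in> {(1::int, s1), (2, s2), (3, s3)} \<Longrightarrow> 1 \<le> i \<Longrightarrow> i \<le> 3 \<Longrightarrow> s ` \<Phi> = adj (i - 1) (adj i \<Phi>)"
  proof -
    fix i s assume isi: "(i, s) \<in> {(1::int, s1), (2, s2), (3, s3)}" and i: "1 \<le> i" "i \<le> 3"
    obtain \<Psi> where \<Psi>: "flag_adj P leq \<Phi> i \<Psi>" "flag_adj P leq \<Psi> (i - 1) (s ` \<Phi>)" using h[OF isi] by blast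
    have "\<Psi> = adj i \<Phi>" using adj_unique[OF F _ _ \<Psi>(1)] i by simp
    moreover have "flag \<Psi>" using \<Psi>(1) by (simp add: flag_adj_def)
    ultimately show "s ` \<Phi> = adj (i - 1) (adj i \<Phi>)" using adj_unique[OF _ _ _ \<Psi>(2)] i by simp
  qed
  show "polytope_aut P leq s1" "polytope_aut P leq s2" "polytope_aut P leq s3" using h by auto
  show "s1 ` \<Phi> = adj 0 (adj 1 \<Phi>)" using gen[of 1 s1] by simp
  show "s2 ` \<Phi> = adj 1 (adj 2 \<Phi>)" using gen[of 2 s2] by simp
  show "s3 ` \<Phi> = adj 2 (adj 3 \<Phi>)" using gen[of 3 s3] by simp
qed

lemma pow_img: assumes A: "polytope_aut P leq s" and F: "flag \<Phi>" and i: "1 \<le> i" "i \<le> 3"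
  and si: "s ` \<Phi> = Rot i \<Phi>"
  shows "(s [^]\<^bsub>GG\<^esub> (n::nat)) ` \<Phi> = (Rot i ^^ n) \<Phi>"
proof (induction n)
  case 0 then show ?case using one_img flag_sub[OF F] by simp
next
  case (Suc n)
  have sn: "polytope_aut P leq (s [^]\<^bsub>GG\<^esub> n)" using aut_pow_nat[OF A] .
  have i1: "0 \<le> i - 1" "i - 1 \<le> 3" "0 \<le> i" "i \<le> 3" using i by auto
  have "(s [^]\<^bsub>GG\<^esub> Suc n) ` \<Phi> = (s [^]\<^bsub>GG\<^esub> n) ` (s ` \<Phi>)"
    using aut_img_mult[OF sn A flag_sub[OF F]] by simp
  also have "\<dots> = adj (i - 1) (adj i ((s [^]\<^bsub>GG\<^esub> n) ` \<Phi>))"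
    using si aut_adj[OF sn adj_flag[OF F i1(3,4)] i1(1,2)] aut_adj[OF sn F i1(3,4)] by (simp add: Rot_def)
  also have "\<dots> = Rot i ((s [^]\<^bsub>GG\<^esub> n) ` \<Phi>)" by (simp add: Rot_def)
  also have "\<dots> = (Rot i ^^ Suc n) \<Phi>" using Suc by simp
  finally show ?case .
qed

lemma disj_chiral: assumes ch: "chiral4 P leq" and A: "polytope_aut P leq s" and F: "flag \<Phi>" and i: "1 \<le> i" "i \<le> 3"
  and si: "s ` \<Phi> = Rot i \<Phi>"
  shows "(Rot i ^^ k) \<Phi> \<noteq> adj i ((Rot i ^^ l) \<Phi>)"
proof
  assume e: "(Rot i ^^ k) \<Phi> = adj i ((Rot i ^^ l) \<Phi>)"
  have i0: "0 \<le> i" "i \<le> 3" using i by auto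
  let ?sk = "s [^]\<^bsub>GG\<^esub> k" and ?sl = "s [^]\<^bsub>GG\<^esub> l"
  have ak: "polytope_aut P leq ?sk" and al: "polytope_aut P leq ?sl" using aut_pow_nat[OF A] by auto
  have ail: "polytope_aut P leq (inv\<^bsub>GG\<^esub> ?sl)" using aut_inv[OF al] .
  have "?sk ` \<Phi> = ?sl ` (adj i \<Phi>)"
    using e pow_img[OF A F i si] aut_adj[OF al F i0] by simp
  have aF: "adj i \<Phi> \<subseteq> P" using flag_sub[OF adj_flag[OF F i0]] .
  have "(inv\<^bsub>GG\<^esub> ?sl \<otimes>\<^bsub>GG\<^esub> ?sk) ` \<Phi> = (inv\<^bsub>GG\<^esub> ?sl) ` (?sl ` (adj i \<Phi>))"
    using aut_img_mult[OF ail ak flag_sub[OF F]] \<open>?sk ` \<Phi> = ?sl ` (adj i \<Phi>)\<close> by simp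
  also have "\<dots> = (inv\<^bsub>GG\<^esub> ?sl \<otimes>\<^bsub>GG\<^esub> ?sl) ` (adj i \<Phi>)"
    using aut_img_mult[OF ail al aF] by simp
  also have "\<dots> = adj i \<Phi>"
    using group.l_inv[OF group_BijGroup aut_carrier[OF al]] one_img[OF aF] by simp
  finally have "same_orbit P leq \<Phi> (adj i \<Phi>)"
    unfolding same_orbit_def using aut_mult[OF ail ak] by blast
  moreover have "flag_adj P leq \<Phi> i (adj i \<Phi>)" using flag_adj_adj[OF F i0] .
  ultimately show False using ch F i0 unfolding chiral4_def by blast
qed

lemma order_facts: assumes ch: "chiral4 P leq" and fin: "finite {\<Psi>. flag \<Psi>}"
  and A: "polytope_aut P leq s" and F: "flag \<Phi>" and i: "1 \<le> i" "i \<le> 3"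
  and si: "s ` \<Phi> = Rot i \<Phi>"
  shows "s [^]\<^bsub>GG\<^esub> card (Vs \<Phi> i) = \<one>\<^bsub>GG\<^esub>"
    "\<And>k. 0 < k \<Longrightarrow> k < card (Vs \<Phi> i) \<Longrightarrow> s [^]\<^bsub>GG\<^esub> k \<noteq> \<one>\<^bsub>GG\<^esub>"
proof -
  note sp = sec_period[OF fin F i disj_chiral[OF ch A F i si]]
  show "s [^]\<^bsub>GG\<^esub> card (Vs \<Phi> i) = \<one>\<^bsub>GG\<^esub>"
    using fix_id[OF aut_pow_nat[OF A] F] pow_img[OF A F i si] sp(1) by simp
  fix k :: nat assume k: "0 < k" "k < card (Vs \<Phi> i)"
  show "s [^]\<^bsub>GG\<^esub> k \<noteq> \<one>\<^bsub>GG\<^esub>"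
  proof
    assume "s [^]\<^bsub>GG\<^esub> k = \<one>\<^bsub>GG\<^esub>"
    then have "(Rot i ^^ k) \<Phi> = \<Phi>" using pow_img[OF A F i si] one_img[OF flag_sub[OF F]] by metis
    then show False using sp(2)[OF k] by simp
  qed
qed

end

context P4 begin

lemma adj_comm': "flag Y \<Longrightarrow> 0 \<le> a \<Longrightarrow> a + 2 \<le> b \<Longrightarrow> b \<le> 3 \<Longrightarrow> adj b (adj a Y) = adj a (adj b Y)"
  using adj_comm[of Y a b] by simp

lemma std_rels: assumes sg: "std_gens P leq \<Phi> s1 s2 s3"
  shows "s2 \<otimes>\<^bsub>GG\<^esub> s1 \<otimes>\<^bsub>GG\<^esub> s2 \<otimes>\<^bsub>GG\<^esub> s1 = \<one>\<^bsub>GG\<^esub>"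
    "s3 \<otimes>\<^bsub>GG\<^esub> s2 \<otimes>\<^bsub>GG\<^esub> s3 \<otimes>\<^bsub>GG\<^esub> s2 = \<one>\<^bsub>GG\<^esub>"
    "s3 \<otimes>\<^bsub>GG\<^esub> s2 \<otimes>\<^bsub>GG\<^esub> s1 \<otimes>\<^bsub>GG\<^esub> s3 \<otimes>\<^bsub>GG\<^esub> s2 \<otimes>\<^bsub>GG\<^esub> s1 = \<one>\<^bsub>GG\<^esub>"
proof -
  note S = std_img[OF sg]
  note F = S(1)
  have ai: "\<And>s Y a b. polytope_aut P leq s \<Longrightarrow> flag Y \<Longrightarrow> 0 \<le> a \<Longrightarrow> a \<le> 3 \<Longrightarrow> 0 \<le> b \<Longrightarrow> b \<le> 3 \<Longrightarrow>
        s ` (adj a (adj b Y)) = adj a (adj b (s ` Y))"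
    using aut_adj adj_flag aut_flag by simp
  have im: "\<And>x y Y. polytope_aut P leq x \<Longrightarrow> polytope_aut P leq y \<Longrightarrow> flag Y \<Longrightarrow> (x \<otimes>\<^bsub>GG\<^esub> y) ` Y = x ` (y ` Y)"
    using aut_img_mult flag_sub by blast
  note simps = im ai aut_mult adj_flag aut_flag adj_adj adj_comm' S(2-7)
  have "(s2 \<otimes>\<^bsub>GG\<^esub> s1 \<otimes>\<^bsub>GG\<^esub> s2 \<otimes>\<^bsub>GG\<^esub> s1) ` \<Phi> = \<Phi>" using F by (simp add: simps)
  then show "s2 \<otimes>\<^bsub>GG\<^esub> s1 \<otimes>\<^bsub>GG\<^esub> s2 \<otimes>\<^bsub>GG\<^esub> s1 = \<one>\<^bsub>GG\<^esub>"
    using fix_id F S by (simp add: aut_mult)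
  have "(s3 \<otimes>\<^bsub>GG\<^esub> s2 \<otimes>\<^bsub>GG\<^esub> s3 \<otimes>\<^bsub>GG\<^esub> s2) ` \<Phi> = \<Phi>" using F by (simp add: simps)
  then show "s3 \<otimes>\<^bsub>GG\<^esub> s2 \<otimes>\<^bsub>GG\<^esub> s3 \<otimes>\<^bsub>GG\<^esub> s2 = \<one>\<^bsub>GG\<^esub>"
    using fix_id F S by (simp add: aut_mult)
  have "(s3 \<otimes>\<^bsub>GG\<^esub> s2 \<otimes>\<^bsub>GG\<^esub> s1 \<otimes>\<^bsub>GG\<^esub> s3 \<otimes>\<^bsub>GG\<^esub> s2 \<otimes>\<^bsub>GG\<^esub> s1) ` \<Phi> = \<Phi>" using F by (simp add: simps)
  then show "s3 \<otimes>\<^bsub>GG\<^esub> s2 \<otimes>\<^bsub>GG\<^esub> s1 \<otimes>\<^bsub>GG\<^esub> s3 \<otimes>\<^bsub>GG\<^esub> s2 \<otimes>\<^bsub>GG\<^esub> s1 = \<one>\<^bsub>GG\<^esub>"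
    using fix_id F S by (simp add: aut_mult)
qed

end


context P4 begin

lemma card_V2: assumes T: "has_type4 P leq p q r" and F: "flag \<Phi>" shows "card (Vs \<Phi> 2) = q"
proof -
  have "Vs \<Phi> 2 = {e\<in>P. face_rank P leq e 1 \<and> leq (fc \<Phi> 0) e \<and> leq e (fc \<Phi> 3)}"
    by (auto simp: Vs_def face_rank_iff)
  moreover have "face_rank P leq (fc \<Phi> 0) 0" "face_rank P leq (fc \<Phi> 3) 3" "leq (fc \<Phi> 0) (fc \<Phi> 3)"
    using fcP[OF F] fc_prop[OF F] fc_le[OF F] by (auto simp: face_rank_iff)
  ultimately show ?thesis using T unfolding has_type4_def by auto
qed

lemma card_V3: assumes T: "has_type4 P leq p q r" and F: "flag \<Phi>" shows "card (Vs \<Phi> 3) = r"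
proof -
  obtain M where M: "fc \<Phi> 4 = M" "M \<in> P" "\<forall>x\<in>P. leq x M" using max_rk_fc[OF F] by blast
  have "Vs \<Phi> 3 = {f\<in>P. face_rank P leq f 2 \<and> leq (fc \<Phi> 1) f}"
    using M by (auto simp: Vs_def face_rank_iff)
  moreover have "face_rank P leq (fc \<Phi> 1) 1"
    using fcP[OF F] fc_prop[OF F] by (auto simp: face_rank_iff)
  ultimately show ?thesis using T unfolding has_type4_def by auto
qed

end

lemma (in group) inv_both: "x \<in> carrier G \<Longrightarrow> y \<in> carrier G \<Longrightarrow> u \<in> carrier G \<Longrightarrow> v \<in> carrier G \<Longrightarrow>
  x \<otimes> y = u \<otimes> v \<Longrightarrow> inv y \<otimes> inv x = inv v \<otimes> inv u"
  by (metis inv_mult_group)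

lemma pow2_split: "(5::nat) \<le> \<beta> \<Longrightarrow> (2::int) ^ \<beta> = 32 * 2 ^ (\<beta> - 5) \<and> (2::int) ^ (\<beta> - 1) = 16 * 2 ^ (\<beta> - 5)
    \<and> (2::int) ^ (\<beta> - 2) = 8 * 2 ^ (\<beta> - 5)"
proof -
  assume b: "5 \<le> \<beta>"
  then obtain d where d: "\<beta> = d + 5" by (metis add.commute le_iff_add)
  show ?thesis by (simp add: d power_add)
qed

lemma main_setup:
  assumes ch: "chiral4 P leq" and ti: "tight4 P leq p q r" and sg: "std_gens P leq \<Phi> s1 s2 s3"
  shows "group (BijGroup P)"
    "s1 \<in> carrier (BijGroup P)" "s2 \<in> carrier (BijGroup P)" "s3 \<in> carrier (BijGroup P)"
    "s2 \<otimes>\<^bsub>BijGroup P\<^esub> s1 \<otimes>\<^bsub>BijGroup P\<^esub> s2 \<otimes>\<^bsub>BijGroup P\<^esub> s1 = \<one>\<^bsub>BijGroup P\<^esub>"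
    "s3 \<otimes>\<^bsub>BijGroup P\<^esub> s2 \<otimes>\<^bsub>BijGroup P\<^esub> s3 \<otimes>\<^bsub>BijGroup P\<^esub> s2 = \<one>\<^bsub>BijGroup P\<^esub>"
    "s3 \<otimes>\<^bsub>BijGroup P\<^esub> s2 \<otimes>\<^bsub>BijGroup P\<^esub> s1 \<otimes>\<^bsub>BijGroup P\<^esub> s3 \<otimes>\<^bsub>BijGroup P\<^esub> s2 \<otimes>\<^bsub>BijGroup P\<^esub> s1 = \<one>\<^bsub>BijGroup P\<^esub>"
    "s2 [^]\<^bsub>BijGroup P\<^esub> q = \<one>\<^bsub>BijGroup P\<^esub>"
    "\<And>k. 0 < k \<Longrightarrow> k < q \<Longrightarrow> s2 [^]\<^bsub>BijGroup P\<^esub> (k::nat) \<noteq> \<one>\<^bsub>BijGroup P\<^esub>"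
    "s3 [^]\<^bsub>BijGroup P\<^esub> r = \<one>\<^bsub>BijGroup P\<^esub>"
proof -
  interpret P4 P leq using ch by (simp add: P4_def chiral4_def)
  note S = std_img[OF sg]
  have fin: "finite {\<Psi>. flag \<Psi>}" using ti by (simp add: tight4_def)
  have T: "has_type4 P leq p q r" using ti by (simp add: tight4_def)
  show "group (BijGroup P)" by (rule group_BijGroup)
  show "s1 \<in> carrier (BijGroup P)" "s2 \<in> carrier (BijGroup P)" "s3 \<in> carrier (BijGroup P)"
    using S aut_carrier by auto
  show "s2 \<otimes>\<^bsub>BijGroup P\<^esub> s1 \<otimes>\<^bsub>BijGroup P\<^esub> s2 \<otimes>\<^bsub>BijGroup P\<^esub> s1 = \<one>\<^bsub>BijGroup P\<^esub>"
    "s3 \<otimes>\<^bsub>BijGroup P\<^esub> s2 \<otimes>\<^bsub>BijGroup P\<^esub> s3 \<otimes>\<^bsub>BijGroup P\<^esub> s2 = \<one>\<^bsub>BijGroup P\<^esub>"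
    "s3 \<otimes>\<^bsub>BijGroup P\<^esub> s2 \<otimes>\<^bsub>BijGroup P\<^esub> s1 \<otimes>\<^bsub>BijGroup P\<^esub> s3 \<otimes>\<^bsub>BijGroup P\<^esub> s2 \<otimes>\<^bsub>BijGroup P\<^esub> s1 = \<one>\<^bsub>BijGroup P\<^esub>"
    using std_rels[OF sg] by auto
  have r2: "s2 ` \<Phi> = Rot 2 \<Phi>" using S by (simp add: Rot_def)
  have r3: "s3 ` \<Phi> = Rot 3 \<Phi>" using S by (simp add: Rot_def)
  note o2 = order_facts[OF ch fin S(3) S(1) _ _ r2]
  note o3 = order_facts[OF ch fin S(4) S(1) _ _ r3]
  show "s2 [^]\<^bsub>BijGroup P\<^esub> q = \<one>\<^bsub>BijGroup P\<^esub>" using o2(1) card_V2[OF T S(1)] by simp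
  show "\<And>k. 0 < k \<Longrightarrow> k < q \<Longrightarrow> s2 [^]\<^bsub>BijGroup P\<^esub> (k::nat) \<noteq> \<one>\<^bsub>BijGroup P\<^esub>"
    using o2(2) card_V2[OF T S(1)] by simp
  show "s3 [^]\<^bsub>BijGroup P\<^esub> r = \<one>\<^bsub>BijGroup P\<^esub>" using o3(1) card_V3[OF T S(1)] by simp
qed


lemma (in group) trans_rel:
  assumes "s \<in> carrier G" "t \<in> carrier G" "s' \<in> carrier G" "t' \<in> carrier G"
  and "s [^] (i::int) \<otimes> t [^] (j::int) = s' [^] (i'::int) \<otimes> t' [^] (j'::int)"
  shows "inv t [^] j \<otimes> inv s [^] i = inv t' [^] j' \<otimes> inv s' [^] i'"
proof -
  have "inv (t [^] j) \<otimes> inv (s [^] i) = inv (t' [^] j') \<otimes> inv (s' [^] i')"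
    using inv_both[OF _ _ _ _ assms(5)] assms by simp
  then show ?thesis using assms by (simp add: int_pow_inv)
qed

lemma (in group) pow1': "x \<in> carrier G \<Longrightarrow> x = x [^] (1::int)" by simp

theorem theorem5p11:
  fixes P :: "'a set" and leq :: "'a \<Rightarrow> 'a \<Rightarrow> bool"
    and \<beta> :: nat and \<epsilon> :: int
  assumes "\<beta> \<ge> 5" and "\<epsilon> \<in> {1, -1}"
  shows "\<not> (\<exists>\<Phi> s1 s2 s3. chiral4 P leq \<and> tight4 P leq 4 (2 ^ \<beta>) 8 \<and>
             std_gens P leq \<Phi> s1 s2 s3 \<and>
             amul P (apow P s2 (-1)) s1 = amul P (apow P s1 (-1)) (apow P s2 (1 + 2 ^ (\<beta> - 1))) \<and>
             amul P s2 (apow P s3 2) = amul P (apow P s3 2) (apow P s2 (1 + \<epsilon> * 2 ^ (\<beta> - 2))))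
       \<and> \<not> (\<exists>\<Phi> s1 s2 s3. chiral4 P leq \<and> tight4 P leq 4 (2 ^ \<beta>) (2 ^ (\<beta> - 1)) \<and>
             std_gens P leq \<Phi> s1 s2 s3 \<and>
             amul P (apow P s2 (-1)) s1 = amul P (apow P s1 (-1)) (apow P s2 (1 + 2 ^ (\<beta> - 1))) \<and>
             amul P (apow P s3 (-1)) s2 =
               amul P (apow P s2 (3 + \<epsilon> * 2 ^ (\<beta> - 2))) (apow P s3 (1 - 2 ^ (\<beta> - 2))) \<and>
             amul P s3 (apow P s2 (-1)) =
               amul P (apow P s2 (-3 + \<epsilon> * 2 ^ (\<beta> - 2))) (apow P s3 (-1 + 2 ^ (\<beta> - 2))))"
proof -
  define e :: int where "e = 2 ^ (\<beta> - 5)"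
  have pw: "(2::int) ^ \<beta> = 32 * e" "(2::int) ^ (\<beta> - 1) = 16 * e" "(2::int) ^ (\<beta> - 2) = 8 * e"
    using pow2_split[OF assms(1)] by (auto simp: e_def)
  have pwn: "int (2 ^ \<beta>) = 32 * e" "int (2 ^ (\<beta> - 1)) = 16 * e" using pw by simp_all
  have eps: "\<epsilon> = 1 \<or> \<epsilon> = -1" using assms(2) by auto
  have qpos: "0 < (2::nat) ^ (\<beta> - 1)" "(2::nat) ^ (\<beta> - 1) < 2 ^ \<beta>"
    using assms(1) by (auto intro: power_strict_increasing)
  have common: False
    if ch: "chiral4 P leq" and ti: "tight4 P leq 4 (2 ^ \<beta>) r" and sg: "std_gens P leq \<Phi> s1 s2 s3"
    and Rr: "amul P (apow P s2 (-1)) s1 = amul P (apow P s1 (-1)) (apow P s2 (1 + 2 ^ (\<beta> - 1)))"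
    and key: "\<And>a b c. group (BijGroup P) \<Longrightarrow> a \<in> carrier (BijGroup P) \<Longrightarrow> b \<in> carrier (BijGroup P) \<Longrightarrow> c \<in> carrier (BijGroup P) \<Longrightarrow>
        a = inv\<^bsub>BijGroup P\<^esub> s1 \<Longrightarrow> b = inv\<^bsub>BijGroup P\<^esub> s2 \<Longrightarrow> c = inv\<^bsub>BijGroup P\<^esub> s3 \<Longrightarrow>
        a \<otimes>\<^bsub>BijGroup P\<^esub> b \<otimes>\<^bsub>BijGroup P\<^esub> a \<otimes>\<^bsub>BijGroup P\<^esub> b = \<one>\<^bsub>BijGroup P\<^esub> \<Longrightarrow>
        b \<otimes>\<^bsub>BijGroup P\<^esub> c \<otimes>\<^bsub>BijGroup P\<^esub> b \<otimes>\<^bsub>BijGroup P\<^esub> c = \<one>\<^bsub>BijGroup P\<^esub> \<Longrightarrow>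
        a \<otimes>\<^bsub>BijGroup P\<^esub> b \<otimes>\<^bsub>BijGroup P\<^esub> c \<otimes>\<^bsub>BijGroup P\<^esub> a \<otimes>\<^bsub>BijGroup P\<^esub> b \<otimes>\<^bsub>BijGroup P\<^esub> c = \<one>\<^bsub>BijGroup P\<^esub> \<Longrightarrow>
        b [^]\<^bsub>BijGroup P\<^esub> (32 * e) = \<one>\<^bsub>BijGroup P\<^esub> \<Longrightarrow>
        c [^]\<^bsub>BijGroup P\<^esub> (int r) = \<one>\<^bsub>BijGroup P\<^esub> \<Longrightarrow>
        inv\<^bsub>BijGroup P\<^esub> b \<otimes>\<^bsub>BijGroup P\<^esub> a = inv\<^bsub>BijGroup P\<^esub> a \<otimes>\<^bsub>BijGroup P\<^esub> b [^]\<^bsub>BijGroup P\<^esub> (1 + 16 * e) \<Longrightarrow>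
        b [^]\<^bsub>BijGroup P\<^esub> (16 * e) = \<one>\<^bsub>BijGroup P\<^esub>"
    for r \<Phi> s1 s2 s3
  proof -
    note M = main_setup[OF ch ti sg]
    interpret G: group "BijGroup P" by (rule M(1))
    define a where "a = inv\<^bsub>BijGroup P\<^esub> s1"
    define b where "b = inv\<^bsub>BijGroup P\<^esub> s2"
    define c where "c = inv\<^bsub>BijGroup P\<^esub> s3"
    have carr: "a \<in> carrier (BijGroup P)" "b \<in> carrier (BijGroup P)" "c \<in> carrier (BijGroup P)"
      using M by (auto simp: a_def b_def c_def)
    have E1: "a \<otimes>\<^bsub>BijGroup P\<^esub> b \<otimes>\<^bsub>BijGroup P\<^esub> a \<otimes>\<^bsub>BijGroup P\<^esub> b = \<one>\<^bsub>BijGroup P\<^esub>"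
    proof -
      have "inv\<^bsub>BijGroup P\<^esub> (s2 \<otimes>\<^bsub>BijGroup P\<^esub> s1 \<otimes>\<^bsub>BijGroup P\<^esub> s2 \<otimes>\<^bsub>BijGroup P\<^esub> s1) = \<one>\<^bsub>BijGroup P\<^esub>"
        using M(5) by simp
      then show ?thesis using M by (simp add: G.inv_mult_group G.m_assoc a_def b_def)
    qed
    have E2: "b \<otimes>\<^bsub>BijGroup P\<^esub> c \<otimes>\<^bsub>BijGroup P\<^esub> b \<otimes>\<^bsub>BijGroup P\<^esub> c = \<one>\<^bsub>BijGroup P\<^esub>"
    proof -
      have "inv\<^bsub>BijGroup P\<^esub> (s3 \<otimes>\<^bsub>BijGroup P\<^esub> s2 \<otimes>\<^bsub>BijGroup P\<^esub> s3 \<otimes>\<^bsub>BijGroup P\<^esub> s2) = \<one>\<^bsub>BijGroup P\<^esub>"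
        using M(6) by simp
      then show ?thesis using M by (simp add: G.inv_mult_group G.m_assoc b_def c_def)
    qed
    have E3: "a \<otimes>\<^bsub>BijGroup P\<^esub> b \<otimes>\<^bsub>BijGroup P\<^esub> c \<otimes>\<^bsub>BijGroup P\<^esub> a \<otimes>\<^bsub>BijGroup P\<^esub> b \<otimes>\<^bsub>BijGroup P\<^esub> c = \<one>\<^bsub>BijGroup P\<^esub>"
    proof -
      have "inv\<^bsub>BijGroup P\<^esub> (s3 \<otimes>\<^bsub>BijGroup P\<^esub> s2 \<otimes>\<^bsub>BijGroup P\<^esub> s1 \<otimes>\<^bsub>BijGroup P\<^esub> s3 \<otimes>\<^bsub>BijGroup P\<^esub> s2 \<otimes>\<^bsub>BijGroup P\<^esub> s1) = \<one>\<^bsub>BijGroup P\<^esub>"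
        using M(7) by simp
      then show ?thesis using M by (simp add: G.inv_mult_group G.m_assoc a_def b_def c_def)
    qed
    have ipi: "\<And>x k. x \<in> carrier (BijGroup P) \<Longrightarrow> inv\<^bsub>BijGroup P\<^esub> x [^]\<^bsub>BijGroup P\<^esub> (int k) = inv\<^bsub>BijGroup P\<^esub> (x [^]\<^bsub>BijGroup P\<^esub> k)"
      by (simp only: int_pow_int G.nat_pow_inv)
    have Bn: "b [^]\<^bsub>BijGroup P\<^esub> (32 * e) = \<one>\<^bsub>BijGroup P\<^esub>"
    proof -
      have "b [^]\<^bsub>BijGroup P\<^esub> (32 * e) = b [^]\<^bsub>BijGroup P\<^esub> (int (2 ^ \<beta>))" by (simp only: pwn)
      also have "\<dots> = inv\<^bsub>BijGroup P\<^esub> (s2 [^]\<^bsub>BijGroup P\<^esub> (2 ^ \<beta> :: nat))" unfolding b_def by (rule ipi) (use M in simp)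
      finally show ?thesis using M(8) by simp
    qed
    have Cr: "c [^]\<^bsub>BijGroup P\<^esub> (int r) = \<one>\<^bsub>BijGroup P\<^esub>"
    proof -
      have "c [^]\<^bsub>BijGroup P\<^esub> (int r) = inv\<^bsub>BijGroup P\<^esub> (s3 [^]\<^bsub>BijGroup P\<^esub> r)" unfolding c_def by (rule ipi) (use M in simp)
      then show ?thesis using M(10) by simp
    qed
    have R1: "inv\<^bsub>BijGroup P\<^esub> b \<otimes>\<^bsub>BijGroup P\<^esub> a = inv\<^bsub>BijGroup P\<^esub> a \<otimes>\<^bsub>BijGroup P\<^esub> b [^]\<^bsub>BijGroup P\<^esub> (1 + 16 * e)"
    proof -
      have "s1 [^]\<^bsub>BijGroup P\<^esub> (1::int) \<otimes>\<^bsub>BijGroup P\<^esub> s2 [^]\<^bsub>BijGroup P\<^esub> (-1::int)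
          = s2 [^]\<^bsub>BijGroup P\<^esub> (1 + 16 * e) \<otimes>\<^bsub>BijGroup P\<^esub> s1 [^]\<^bsub>BijGroup P\<^esub> (-1::int)"
        using Rr M pw by (simp add: amul_def apow_def)
      from G.trans_rel[OF _ _ _ _ this] M
      show ?thesis by (simp add: a_def b_def G.int_pow_neg)
    qed
    have "b [^]\<^bsub>BijGroup P\<^esub> (16 * e) = \<one>\<^bsub>BijGroup P\<^esub>"
      by (rule key[OF M(1) carr a_def b_def c_def E1 E2 E3 Bn Cr R1])
    moreover have "b [^]\<^bsub>BijGroup P\<^esub> (16 * e) = inv\<^bsub>BijGroup P\<^esub> (s2 [^]\<^bsub>BijGroup P\<^esub> (2 ^ (\<beta> - 1) :: nat))"
    proof -
      have "b [^]\<^bsub>BijGroup P\<^esub> (16 * e) = b [^]\<^bsub>BijGroup P\<^esub> (int (2 ^ (\<beta> - 1)))" by (simp only: pwn)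
      also have "\<dots> = inv\<^bsub>BijGroup P\<^esub> (s2 [^]\<^bsub>BijGroup P\<^esub> (2 ^ (\<beta> - 1) :: nat))" unfolding b_def by (rule ipi) (use M in simp)
      finally show ?thesis .
    qed
    ultimately have "s2 [^]\<^bsub>BijGroup P\<^esub> (2 ^ (\<beta> - 1) :: nat) = \<one>\<^bsub>BijGroup P\<^esub>" using M by simp
    then show False using M(9)[OF qpos] by simp
  qed
  show ?thesis
  proof (intro conjI notI)
    assume "\<exists>\<Phi> s1 s2 s3. chiral4 P leq \<and> tight4 P leq 4 (2 ^ \<beta>) 8 \<and>
             std_gens P leq \<Phi> s1 s2 s3 \<and>
             amul P (apow P s2 (-1)) s1 = amul P (apow P s1 (-1)) (apow P s2 (1 + 2 ^ (\<beta> - 1))) \<and>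
             amul P s2 (apow P s3 2) = amul P (apow P s3 2) (apow P s2 (1 + \<epsilon> * 2 ^ (\<beta> - 2)))"
    then obtain \<Phi> s1 s2 s3 where ch: "chiral4 P leq" and ti: "tight4 P leq 4 (2 ^ \<beta>) 8"
      and sg: "std_gens P leq \<Phi> s1 s2 s3"
      and Rr: "amul P (apow P s2 (-1)) s1 = amul P (apow P s1 (-1)) (apow P s2 (1 + 2 ^ (\<beta> - 1)))"
      and R2: "amul P s2 (apow P s3 2) = amul P (apow P s3 2) (apow P s2 (1 + \<epsilon> * 2 ^ (\<beta> - 2)))" by blast
    show False
    proof (rule common[OF ch ti sg Rr])
      fix a b c
      assume Gp: "group (BijGroup P)" and carr: "a \<in> carrier (BijGroup P)" "b \<in> carrier (BijGroup P)" "c \<in> carrier (BijGroup P)"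
        and ad: "a = inv\<^bsub>BijGroup P\<^esub> s1" and bd: "b = inv\<^bsub>BijGroup P\<^esub> s2" and cd: "c = inv\<^bsub>BijGroup P\<^esub> s3"
        and E1: "a \<otimes>\<^bsub>BijGroup P\<^esub> b \<otimes>\<^bsub>BijGroup P\<^esub> a \<otimes>\<^bsub>BijGroup P\<^esub> b = \<one>\<^bsub>BijGroup P\<^esub>"
        and E2: "b \<otimes>\<^bsub>BijGroup P\<^esub> c \<otimes>\<^bsub>BijGroup P\<^esub> b \<otimes>\<^bsub>BijGroup P\<^esub> c = \<one>\<^bsub>BijGroup P\<^esub>"
        and E3: "a \<otimes>\<^bsub>BijGroup P\<^esub> b \<otimes>\<^bsub>BijGroup P\<^esub> c \<otimes>\<^bsub>BijGroup P\<^esub> a \<otimes>\<^bsub>BijGroup P\<^esub> b \<otimes>\<^bsub>BijGroup P\<^esub> c = \<one>\<^bsub>BijGroup P\<^esub>"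
        and Bn: "b [^]\<^bsub>BijGroup P\<^esub> (32 * e) = \<one>\<^bsub>BijGroup P\<^esub>"
        and Cr: "c [^]\<^bsub>BijGroup P\<^esub> (int 8) = \<one>\<^bsub>BijGroup P\<^esub>"
        and R1: "inv\<^bsub>BijGroup P\<^esub> b \<otimes>\<^bsub>BijGroup P\<^esub> a = inv\<^bsub>BijGroup P\<^esub> a \<otimes>\<^bsub>BijGroup P\<^esub> b [^]\<^bsub>BijGroup P\<^esub> (1 + 16 * e)"
      interpret G: group "BijGroup P" by (rule Gp)
      have s: "s1 \<in> carrier (BijGroup P)" "s2 \<in> carrier (BijGroup P)" "s3 \<in> carrier (BijGroup P)"
        using main_setup[OF ch ti sg] by auto
      have R2': "b \<otimes>\<^bsub>BijGroup P\<^esub> c [^]\<^bsub>BijGroup P\<^esub> (2::int) = c [^]\<^bsub>BijGroup P\<^esub> (2::int) \<otimes>\<^bsub>BijGroup P\<^esub> b [^]\<^bsub>BijGroup P\<^esub> (1 + \<epsilon> * (8 * e))"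
      proof -
        have "s3 [^]\<^bsub>BijGroup P\<^esub> (2::int) \<otimes>\<^bsub>BijGroup P\<^esub> s2 [^]\<^bsub>BijGroup P\<^esub> (1::int)
          = s2 [^]\<^bsub>BijGroup P\<^esub> (1 + \<epsilon> * (8 * e)) \<otimes>\<^bsub>BijGroup P\<^esub> s3 [^]\<^bsub>BijGroup P\<^esub> (2::int)"
          using R2 s pw by (simp add: amul_def apow_def)
        from G.trans_rel[OF _ _ _ _ this] s
        show ?thesis by (simp add: bd cd)
      qed
      have C8: "c [^]\<^bsub>BijGroup P\<^esub> (8::int) = \<one>\<^bsub>BijGroup P\<^esub>" using Cr by simp
      show "b [^]\<^bsub>BijGroup P\<^esub> (16 * e) = \<one>\<^bsub>BijGroup P\<^esub>"
        by (rule G.partA[OF carr eps E1 E2 E3 Bn C8 R1 R2'])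
    qed
  next
    assume "\<exists>\<Phi> s1 s2 s3. chiral4 P leq \<and> tight4 P leq 4 (2 ^ \<beta>) (2 ^ (\<beta> - 1)) \<and>
             std_gens P leq \<Phi> s1 s2 s3 \<and>
             amul P (apow P s2 (-1)) s1 = amul P (apow P s1 (-1)) (apow P s2 (1 + 2 ^ (\<beta> - 1))) \<and>
             amul P (apow P s3 (-1)) s2 =
               amul P (apow P s2 (3 + \<epsilon> * 2 ^ (\<beta> - 2))) (apow P s3 (1 - 2 ^ (\<beta> - 2))) \<and>
             amul P s3 (apow P s2 (-1)) =
               amul P (apow P s2 (-3 + \<epsilon> * 2 ^ (\<beta> - 2))) (apow P s3 (-1 + 2 ^ (\<beta> - 2)))"
    then obtain \<Phi> s1 s2 s3 where ch: "chiral4 P leq" and ti: "tight4 P leq 4 (2 ^ \<beta>) (2 ^ (\<beta> - 1))"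
      and sg: "std_gens P leq \<Phi> s1 s2 s3"
      and Rr: "amul P (apow P s2 (-1)) s1 = amul P (apow P s1 (-1)) (apow P s2 (1 + 2 ^ (\<beta> - 1)))"
      and R3: "amul P (apow P s3 (-1)) s2 =
               amul P (apow P s2 (3 + \<epsilon> * 2 ^ (\<beta> - 2))) (apow P s3 (1 - 2 ^ (\<beta> - 2)))"
      and R4: "amul P s3 (apow P s2 (-1)) =
               amul P (apow P s2 (-3 + \<epsilon> * 2 ^ (\<beta> - 2))) (apow P s3 (-1 + 2 ^ (\<beta> - 2)))" by blast
    show False
    proof (rule common[OF ch ti sg Rr])
      fix a b c
      assume Gp: "group (BijGroup P)" and carr: "a \<in> carrier (BijGroup P)" "b \<in> carrier (BijGroup P)" "c \<in> carrier (BijGroup P)"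
        and ad: "a = inv\<^bsub>BijGroup P\<^esub> s1" and bd: "b = inv\<^bsub>BijGroup P\<^esub> s2" and cd: "c = inv\<^bsub>BijGroup P\<^esub> s3"
        and E1: "a \<otimes>\<^bsub>BijGroup P\<^esub> b \<otimes>\<^bsub>BijGroup P\<^esub> a \<otimes>\<^bsub>BijGroup P\<^esub> b = \<one>\<^bsub>BijGroup P\<^esub>"
        and E2: "b \<otimes>\<^bsub>BijGroup P\<^esub> c \<otimes>\<^bsub>BijGroup P\<^esub> b \<otimes>\<^bsub>BijGroup P\<^esub> c = \<one>\<^bsub>BijGroup P\<^esub>"
        and E3: "a \<otimes>\<^bsub>BijGroup P\<^esub> b \<otimes>\<^bsub>BijGroup P\<^esub> c \<otimes>\<^bsub>BijGroup P\<^esub> a \<otimes>\<^bsub>BijGroup P\<^esub> b \<otimes>\<^bsub>BijGroup P\<^esub> c = \<one>\<^bsub>BijGroup P\<^esub>"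
        and Bn: "b [^]\<^bsub>BijGroup P\<^esub> (32 * e) = \<one>\<^bsub>BijGroup P\<^esub>"
        and Cr: "c [^]\<^bsub>BijGroup P\<^esub> (int (2 ^ (\<beta> - 1))) = \<one>\<^bsub>BijGroup P\<^esub>"
        and R1: "inv\<^bsub>BijGroup P\<^esub> b \<otimes>\<^bsub>BijGroup P\<^esub> a = inv\<^bsub>BijGroup P\<^esub> a \<otimes>\<^bsub>BijGroup P\<^esub> b [^]\<^bsub>BijGroup P\<^esub> (1 + 16 * e)"
      interpret G: group "BijGroup P" by (rule Gp)
      have s: "s1 \<in> carrier (BijGroup P)" "s2 \<in> carrier (BijGroup P)" "s3 \<in> carrier (BijGroup P)"
        using main_setup[OF ch ti sg] by auto
      have R3': "inv\<^bsub>BijGroup P\<^esub> c \<otimes>\<^bsub>BijGroup P\<^esub> b = b [^]\<^bsub>BijGroup P\<^esub> (3 + \<epsilon> * (8 * e)) \<otimes>\<^bsub>BijGroup P\<^esub> c [^]\<^bsub>BijGroup P\<^esub> (1 - 8 * e)"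
      proof -
        have "s2 [^]\<^bsub>BijGroup P\<^esub> (1::int) \<otimes>\<^bsub>BijGroup P\<^esub> s3 [^]\<^bsub>BijGroup P\<^esub> (-1::int)
          = s3 [^]\<^bsub>BijGroup P\<^esub> (1 - 8 * e) \<otimes>\<^bsub>BijGroup P\<^esub> s2 [^]\<^bsub>BijGroup P\<^esub> (3 + \<epsilon> * (8 * e))"
          using R3 s pw by (simp add: amul_def apow_def)
        from G.trans_rel[OF _ _ _ _ this] s
        show ?thesis by (simp add: bd cd G.int_pow_neg)
      qed
      have R4': "c \<otimes>\<^bsub>BijGroup P\<^esub> inv\<^bsub>BijGroup P\<^esub> b = b [^]\<^bsub>BijGroup P\<^esub> (-3 + \<epsilon> * (8 * e)) \<otimes>\<^bsub>BijGroup P\<^esub> c [^]\<^bsub>BijGroup P\<^esub> (-1 + 8 * e)"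
      proof -
        have "s2 [^]\<^bsub>BijGroup P\<^esub> (-1::int) \<otimes>\<^bsub>BijGroup P\<^esub> s3 [^]\<^bsub>BijGroup P\<^esub> (1::int)
          = s3 [^]\<^bsub>BijGroup P\<^esub> (-1 + 8 * e) \<otimes>\<^bsub>BijGroup P\<^esub> s2 [^]\<^bsub>BijGroup P\<^esub> (-3 + \<epsilon> * (8 * e))"
          using R4 s pw by (simp add: amul_def apow_def)
        from G.trans_rel[OF _ _ _ _ this] s
        show ?thesis by (simp add: bd cd G.int_pow_neg)
      qed
      have C16: "c [^]\<^bsub>BijGroup P\<^esub> (16 * e) = \<one>\<^bsub>BijGroup P\<^esub>" using Cr pwn by simp
      show "b [^]\<^bsub>BijGroup P\<^esub> (16 * e) = \<one>\<^bsub>BijGroup P\<^esub>"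
        by (rule G.partB[OF carr e_def eps E1 E2 E3 Bn C16 R1 R3' R4'])
    qed
  qed
qed


end
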